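(* Let $R$ be a valuation ring with maximal ideal $P$, let $E$ be an injective $R$-module and let $r\in P$. Then $E/rE$ is an injective $R/rR$-module.
   Context: All rings are commutative with identity. A valuation ring is a ring whose ideals are totally ordered by inclusion; $P$ denotes its unique maximal ideal. *)

theory Defs
  imports "HOL-Algebra.Module" "HOL-Algebra.QuotRing"
begin

definition valuation_ring :: "('a, 'm) ring_scheme \<Rightarrow> bool" where
  "valuation_ring R \<longleftrightarrow> cring R \<and>
     (\<forall>I J. ideal I R \<and> ideal J R \<longrightarrow> I \<subseteq> J \<or> J \<subseteq> I)"

definition lin_on ::
  "('a, 'm) ring_scheme \<Rightarrow> ('a, 'b, 'n) module_scheme \<Rightarrow> 'b set
     \<Rightarrow> ('a, 'c, 'k) module_scheme \<Rightarrow> ('b \<Rightarrow> 'c) \<Rightarrow> bool" where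
  "lin_on R M S N f \<longleftrightarrow>
     (\<forall>x\<in>S. f x \<in> carrier N) \<and>
     (\<forall>x\<in>S. \<forall>y\<in>S. f (x \<oplus>\<^bsub>M\<^esub> y) = f x \<oplus>\<^bsub>N\<^esub> f y) \<and>
     (\<forall>a\<in>carrier R. \<forall>x\<in>S. f (a \<odot>\<^bsub>M\<^esub> x) = a \<odot>\<^bsub>N\<^esub> f x)"

text \<open>Since HOL cannot quantify over types inside a
  formula, the test modules M range over modules whose carrier lives in the type 'c,
  given as a parameter.\<close>
definition injective_module ::
  "('a, 'm) ring_scheme \<Rightarrow> ('a, 'b, 'n) module_scheme \<Rightarrow> 'c itself \<Rightarrow> bool" where
  "injective_module R E (T :: 'c itself) \<longleftrightarrow> module R E \<and>
     (\<forall>(M :: ('a, 'c) module) S f. module R M \<and> submodule S R M \<and> lin_on R M S E f \<longrightarrow>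
        (\<exists>g. lin_on R M (carrier M) E g \<and> (\<forall>x\<in>S. g x = f x)))"

definition smult_sub :: "('a, 'b, 'n) module_scheme \<Rightarrow> 'a \<Rightarrow> 'b set" where
  "smult_sub E r = {r \<odot>\<^bsub>E\<^esub> x | x. x \<in> carrier E}"

text \<open>The quotient M/N, viewed as a module over the quotient ring R/I (where I M \<subseteq> N).
  Elements are additive cosets x + N; the scalar (a + I) acts on (x + N) giving a x + N.
  The multiplicative fields of the module record are irrelevant for modules.\<close>
definition quot_smult :: "('a, 'b, 'n) module_scheme \<Rightarrow> 'b set \<Rightarrow> 'a set \<Rightarrow> 'b set \<Rightarrow> 'b set" where
  "quot_smult M N S T = (\<Union>a\<in>S. \<Union>x\<in>T. {a \<odot>\<^bsub>M\<^esub> x}) <+>\<^bsub>M\<^esub> N"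

definition quot_module ::
  "('a, 'm) ring_scheme \<Rightarrow> ('a, 'b, 'n) module_scheme \<Rightarrow> 'b set \<Rightarrow> ('a set, 'b set) module" where
  "quot_module R M N =
     \<lparr> carrier = a_rcosets\<^bsub>M\<^esub> N,
       mult = set_mult (add_monoid M),
       one = N,
       zero = N,
       add = (\<lambda>U V. U <+>\<^bsub>M\<^esub> V),
       smult = quot_smult M N \<rparr>"

end

theory Submission
  imports Defs
begin


definition baer :: "('a, 'm) ring_scheme \<Rightarrow> ('a, 'b, 'n) module_scheme \<Rightarrow> bool" where
  "baer R E \<longleftrightarrow> (\<forall>K \<psi>. ideal K R \<and> (\<forall>k\<in>K. \<psi> k \<in> carrier E)
     \<and> (\<forall>k\<in>K. \<forall>k'\<in>K. \<psi> (k \<oplus>\<^bsub>R\<^esub> k') = \<psi> k \<oplus>\<^bsub>E\<^esub> \<psi> k')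
     \<and> (\<forall>t\<in>carrier R. \<forall>k\<in>K. \<psi> (t \<otimes>\<^bsub>R\<^esub> k) = t \<odot>\<^bsub>E\<^esub> \<psi> k)
     \<longrightarrow> (\<exists>e\<in>carrier E. \<forall>k\<in>K. \<psi> k = k \<odot>\<^bsub>E\<^esub> e))"

definition self_mod :: "('a, 'm) ring_scheme \<Rightarrow> ('a, 'a) module" where
  "self_mod R = \<lparr>carrier = carrier R, mult = mult R, one = one R, zero = zero R,
      add = add R, smult = mult R\<rparr>"

lemma self_mod_module: assumes "cring R" shows "module R (self_mod R)"
proof -
  interpret cring R by fact
  have ag: "abelian_group (self_mod R)"
    by (rule abelian_groupI) (auto simp: self_mod_def a_ac intro: a_assoc l_neg)
  show ?thesis
    by (rule moduleI[OF assms ag]) (auto simp: self_mod_def m_assoc l_distr r_distr)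
qed

lemma self_mod_inv: "a_inv (self_mod R) = a_inv R"
  by (rule ext) (simp add: a_inv_def m_inv_def self_mod_def)

lemma baer_from_inj:
  fixes R :: "('a, 'm) ring_scheme" (structure)
  assumes "cring R" "injective_module R E TYPE('a)"
  shows "baer R E"
  unfolding baer_def
proof (intro allI impI, elim conjE)
  interpret cring R by fact
  fix K \<psi> assume K: "ideal K R" and cl: "\<forall>k\<in>K. \<psi> k \<in> carrier E"
    and ad: "\<forall>k\<in>K. \<forall>k'\<in>K. \<psi> (k \<oplus> k') = \<psi> k \<oplus>\<^bsub>E\<^esub> \<psi> k'"
    and sm: "\<forall>t\<in>carrier R. \<forall>k\<in>K. \<psi> (t \<otimes> k) = t \<odot>\<^bsub>E\<^esub> \<psi> k"
  interpret K: ideal K R by fact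
  have modR: "module R (self_mod R)" by (rule self_mod_module) fact
  interpret RM: module R "self_mod R" by fact
  have sub: "submodule K R (self_mod R)"
    by (rule RM.submoduleI) (auto simp: self_mod_inv, auto simp: self_mod_def K.a_subset K.I_l_closed)
  have lin: "lin_on R (self_mod R) K E \<psi>"
    unfolding lin_on_def using cl ad sm by (simp add: self_mod_def)
  from assms(2) have modE: "module R E" and
    ext: "\<And>(M :: ('a, 'a) module) S f. module R M \<Longrightarrow> submodule S R M \<Longrightarrow> lin_on R M S E f \<Longrightarrow>
        (\<exists>g. lin_on R M (carrier M) E g \<and> (\<forall>x\<in>S. g x = f x))"
    unfolding injective_module_def by blast+
  obtain g where g: "lin_on R (self_mod R) (carrier (self_mod R)) E g" and gK: "\<forall>x\<in>K. g x = \<psi> x"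
    using ext[OF modR sub lin] by blast
  show "\<exists>e\<in>carrier E. \<forall>k\<in>K. \<psi> k = k \<odot>\<^bsub>E\<^esub> e"
  proof (intro bexI ballI)
    show "g \<one> \<in> carrier E" using g by (auto simp: lin_on_def self_mod_def)
    fix k assume k: "k \<in> K"
    then have kc: "k \<in> carrier R" using K.a_subset by blast
    have "\<forall>a\<in>carrier R. \<forall>x\<in>carrier R. g (a \<otimes> x) = a \<odot>\<^bsub>E\<^esub> g x"
      using g by (simp add: lin_on_def self_mod_def)
    then have "g k = k \<odot>\<^bsub>E\<^esub> g \<one>" using kc by (metis one_closed r_one)
    then show "\<psi> k = k \<odot>\<^bsub>E\<^esub> g \<one>" using gK k kc by simp
  qed
qed


lemma (in cring) ideal_byprops:
  assumes "I \<subseteq> carrier R" "\<zero> \<in> I" "\<And>a b. a \<in> I \<Longrightarrow> b \<in> I \<Longrightarrow> a \<oplus> b \<in> I"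
    "\<And>a x. a \<in> I \<Longrightarrow> x \<in> carrier R \<Longrightarrow> x \<otimes> a \<in> I"
  shows "ideal I R"
proof (rule idealI)
  show "ring R" by (rule ring_axioms)
  show "subgroup I (add_monoid R)"
  proof
    show "I \<subseteq> carrier (add_monoid R)" using assms(1) by simp
    show "\<And>x y. x \<in> I \<Longrightarrow> y \<in> I \<Longrightarrow> x \<otimes>\<^bsub>add_monoid R\<^esub> y \<in> I" using assms(3) by simp
    show "\<one>\<^bsub>add_monoid R\<^esub> \<in> I" using assms(2) by simp
    fix x assume x: "x \<in> I"
    then have xc: "x \<in> carrier R" using assms(1) by blast
    have "(\<ominus> \<one>) \<otimes> x \<in> I" using assms(4)[OF x] by simp
    moreover have "(\<ominus> \<one>) \<otimes> x = \<ominus> x" using xc by (simp add: l_minus)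
    ultimately show "inv\<^bsub>add_monoid R\<^esub> x \<in> I" by (simp add: a_inv_def)
  qed
  show "\<And>a x. a \<in> I \<Longrightarrow> x \<in> carrier R \<Longrightarrow> x \<otimes> a \<in> I" by (rule assms(4))
  show "\<And>a x. a \<in> I \<Longrightarrow> x \<in> carrier R \<Longrightarrow> a \<otimes> x \<in> I"
    using assms(1,4) m_comm by (metis subsetD)
qed

lemma (in abelian_group) ag_shift:
  assumes "p \<in> carrier G" "q \<in> carrier G" "u \<in> carrier G" "v \<in> carrier G"
  shows "p \<oplus> u = q \<oplus> v \<longleftrightarrow> u \<oplus> \<ominus> v = q \<oplus> \<ominus> p"
proof
  assume "p \<oplus> u = q \<oplus> v"
  then show "u \<oplus> \<ominus> v = q \<oplus> \<ominus> p"
    by (smt (verit) a_assoc a_closed a_lcomm abelian_group.a_inv_closed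
      abelian_group_axioms abelian_monoidE(4) abelian_monoid_axioms assms(1,2,3,4) l_neg r_neg)
next
  assume "u \<oplus> \<ominus> v = q \<oplus> \<ominus> p"
  then show "p \<oplus> u = q \<oplus> v"
    by (smt (verit, ccfv_SIG) a_closed a_comm a_inv_closed a_lcomm assms(1,2,3,4) r_neg2)
qed

lemma (in abelian_group) ag_swap4:
  assumes "p \<in> carrier G" "q \<in> carrier G" "u \<in> carrier G" "v \<in> carrier G"
  shows "(p \<oplus> u) \<oplus> (q \<oplus> v) = (p \<oplus> q) \<oplus> (u \<oplus> v)"
  using assms by (simp add: a_ac)

lemma baer_criterion:
  fixes R (structure) and M :: "('a, 'c, 'k) module_scheme"
  assumes modE: "module R E" and bE: "baer R E" and modM: "module R M"
    and subS: "submodule S R M" and linf: "lin_on R M S E f"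
  shows "\<exists>g. lin_on R M (carrier M) E g \<and> (\<forall>x\<in>S. g x = f x)"
proof -
  interpret E: module R E by fact
  interpret M: module R M by fact
  interpret S: submodule S R M by fact
  have S0: "\<zero>\<^bsub>M\<^esub> \<in> S" using S.one_closed by simp
  have Ssub: "S \<subseteq> carrier M" using S.subset by simp
  have fc: "\<And>x. x \<in> S \<Longrightarrow> f x \<in> carrier E" using linf by (simp add: lin_on_def)
  have fadd: "\<And>x y. x \<in> S \<Longrightarrow> y \<in> S \<Longrightarrow> f (x \<oplus>\<^bsub>M\<^esub> y) = f x \<oplus>\<^bsub>E\<^esub> f y"
    using linf by (simp add: lin_on_def)
  have fsm: "\<And>a x. a \<in> carrier R \<Longrightarrow> x \<in> S \<Longrightarrow> f (a \<odot>\<^bsub>M\<^esub> x) = a \<odot>\<^bsub>E\<^esub> f x"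
    using linf by (simp add: lin_on_def)
  define A where "A = {G. G \<subseteq> carrier M \<times> carrier E \<and> (\<forall>x\<in>S. (x, f x) \<in> G)
     \<and> (\<forall>x y y'. (x, y) \<in> G \<longrightarrow> (x, y') \<in> G \<longrightarrow> y = y')
     \<and> (\<forall>x y x' y'. (x, y) \<in> G \<longrightarrow> (x', y') \<in> G \<longrightarrow> (x \<oplus>\<^bsub>M\<^esub> x', y \<oplus>\<^bsub>E\<^esub> y') \<in> G)
     \<and> (\<forall>a x y. a \<in> carrier R \<longrightarrow> (x, y) \<in> G \<longrightarrow> (a \<odot>\<^bsub>M\<^esub> x, a \<odot>\<^bsub>E\<^esub> y) \<in> G)}"
  define G0 where "G0 = {(x, f x) | x. x \<in> S}"
  have Sadd: "\<And>x y. x \<in> S \<Longrightarrow> y \<in> S \<Longrightarrow> x \<oplus>\<^bsub>M\<^esub> y \<in> S"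
    using S.m_closed by simp
  have G0A: "G0 \<in> A"
    unfolding A_def
  proof (intro CollectI conjI allI impI ballI)
    show "G0 \<subseteq> carrier M \<times> carrier E" unfolding G0_def using Ssub fc by blast
    fix x assume "x \<in> S" then show "(x, f x) \<in> G0" unfolding G0_def by blast
  next
    fix x y y' assume "(x, y) \<in> G0" "(x, y') \<in> G0" then show "y = y'" unfolding G0_def by blast
  next
    fix x y x' y' assume a: "(x, y) \<in> G0" and b: "(x', y') \<in> G0"
    then have x: "x \<in> S" "y = f x" and x': "x' \<in> S" "y' = f x'" unfolding G0_def by blast+
    have "(x \<oplus>\<^bsub>M\<^esub> x', f (x \<oplus>\<^bsub>M\<^esub> x')) \<in> G0"
      unfolding G0_def using Sadd[OF x(1) x'(1)] by blast
    then show "(x \<oplus>\<^bsub>M\<^esub> x', y \<oplus>\<^bsub>E\<^esub> y') \<in> G0" using fadd[OF x(1) x'(1)] x x' by simp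
  next
    fix a x y assume a: "a \<in> carrier R" and b: "(x, y) \<in> G0"
    then have x: "x \<in> S" "y = f x" unfolding G0_def by blast+
    have "(a \<odot>\<^bsub>M\<^esub> x, f (a \<odot>\<^bsub>M\<^esub> x)) \<in> G0"
      unfolding G0_def using S.smult_closed[OF a x(1)] by blast
    then show "(a \<odot>\<^bsub>M\<^esub> x, a \<odot>\<^bsub>E\<^esub> y) \<in> G0" using fsm[OF a x(1)] x by simp
  qed
  have "\<exists>G\<in>A. \<forall>X\<in>A. G \<subseteq> X \<longrightarrow> X = G"
  proof (rule Zorn_Lemma2, intro ballI)
    fix C assume C: "C \<in> chains A"
    show "\<exists>U\<in>A. \<forall>X\<in>C. X \<subseteq> U"
    proof (cases "C = {}")
      case True then show ?thesis using G0A by blast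
    next
      case False
      have CA: "C \<subseteq> A" and ch: "\<And>X Y. X \<in> C \<Longrightarrow> Y \<in> C \<Longrightarrow> X \<subseteq> Y \<or> Y \<subseteq> X"
        using C by (auto simp: chains_def chain_subset_def)
      have two: "\<And>p q. p \<in> \<Union>C \<Longrightarrow> q \<in> \<Union>C \<Longrightarrow> \<exists>X\<in>C. p \<in> X \<and> q \<in> X"
        using ch by blast
      have "\<Union>C \<in> A"
        unfolding A_def
      proof (intro CollectI conjI allI impI ballI)
        show "\<Union>C \<subseteq> carrier M \<times> carrier E" using CA by (auto simp: A_def)
        fix x assume x: "x \<in> S"
        obtain X where X: "X \<in> C" using False by blast
        then have "X \<in> A" using CA by blast
        then have "(x, f x) \<in> X" using x unfolding A_def by blast
        then show "(x, f x) \<in> \<Union>C" using X by blast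
      next
        fix x y y' assume "(x, y) \<in> \<Union>C" "(x, y') \<in> \<Union>C"
        then obtain X where "X \<in> C" "(x, y) \<in> X" "(x, y') \<in> X" using two by blast
        then have "X \<in> A" "(x, y) \<in> X" "(x, y') \<in> X" using CA by blast+
        then show "y = y'" unfolding A_def by blast
      next
        fix x y x' y' assume "(x, y) \<in> \<Union>C" "(x', y') \<in> \<Union>C"
        then obtain X where "X \<in> C" "(x, y) \<in> X" "(x', y') \<in> X" using two by blast
        then have "X \<in> A" "X \<in> C" "(x, y) \<in> X" "(x', y') \<in> X" using CA by blast+
        then have "(x \<oplus>\<^bsub>M\<^esub> x', y \<oplus>\<^bsub>E\<^esub> y') \<in> X" unfolding A_def by blast
        then show "(x \<oplus>\<^bsub>M\<^esub> x', y \<oplus>\<^bsub>E\<^esub> y') \<in> \<Union>C" using \<open>X \<in> C\<close> by blast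
      next
        fix a x y assume "a \<in> carrier R" "(x, y) \<in> \<Union>C"
        then obtain X where "X \<in> C" "(x, y) \<in> X" "a \<in> carrier R" by blast
        then have "X \<in> A" "X \<in> C" "(x, y) \<in> X" "a \<in> carrier R" using CA by blast+
        then have "(a \<odot>\<^bsub>M\<^esub> x, a \<odot>\<^bsub>E\<^esub> y) \<in> X" unfolding A_def by blast
        then show "(a \<odot>\<^bsub>M\<^esub> x, a \<odot>\<^bsub>E\<^esub> y) \<in> \<Union>C" using \<open>X \<in> C\<close> by blast
      qed
      then show ?thesis by blast
    qed
  qed
  then obtain G where GA: "G \<in> A" and Gmax: "\<And>X. X \<in> A \<Longrightarrow> G \<subseteq> X \<Longrightarrow> X = G" by blast
  have Gsub: "G \<subseteq> carrier M \<times> carrier E" using GA by (simp add: A_def)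
  have GS: "\<And>x. x \<in> S \<Longrightarrow> (x, f x) \<in> G" using GA by (simp add: A_def)
  have Guniq: "\<And>x y y'. (x, y) \<in> G \<Longrightarrow> (x, y') \<in> G \<Longrightarrow> y = y'" using GA by (simp add: A_def)
  have Gadd: "\<And>x y x' y'. (x, y) \<in> G \<Longrightarrow> (x', y') \<in> G \<Longrightarrow> (x \<oplus>\<^bsub>M\<^esub> x', y \<oplus>\<^bsub>E\<^esub> y') \<in> G"
    using GA by (simp add: A_def)
  have Gsm: "\<And>a x y. a \<in> carrier R \<Longrightarrow> (x, y) \<in> G \<Longrightarrow> (a \<odot>\<^bsub>M\<^esub> x, a \<odot>\<^bsub>E\<^esub> y) \<in> G"
    using GA by (simp add: A_def)
  have Gc: "\<And>x y. (x, y) \<in> G \<Longrightarrow> x \<in> carrier M \<and> y \<in> carrier E" using Gsub by blast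
  have G00: "(\<zero>\<^bsub>M\<^esub>, \<zero>\<^bsub>E\<^esub>) \<in> G"
  proof -
    have "(\<zero> \<odot>\<^bsub>M\<^esub> \<zero>\<^bsub>M\<^esub>, \<zero> \<odot>\<^bsub>E\<^esub> f \<zero>\<^bsub>M\<^esub>) \<in> G" using Gsm GS S0 by blast
    then show ?thesis using fc S0 by simp
  qed
  have Gneg: "\<And>x y. (x, y) \<in> G \<Longrightarrow> (\<ominus>\<^bsub>M\<^esub> x, \<ominus>\<^bsub>E\<^esub> y) \<in> G"
  proof -
    fix x y assume xy: "(x, y) \<in> G"
    have "((\<ominus> \<one>) \<odot>\<^bsub>M\<^esub> x, (\<ominus> \<one>) \<odot>\<^bsub>E\<^esub> y) \<in> G" using Gsm xy by simp
    then show "(\<ominus>\<^bsub>M\<^esub> x, \<ominus>\<^bsub>E\<^esub> y) \<in> G" using Gc[OF xy]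
      by (simp add: E.smult_l_minus M.smult_l_minus)
  qed
  have Dfull: "\<forall>m\<in>carrier M. \<exists>y. (m, y) \<in> G"
  proof (rule ccontr)
    assume "\<not> ?thesis"
    then obtain m where mc: "m \<in> carrier M" and mD: "\<And>y. (m, y) \<notin> G" by blast
    define J where "J = {a \<in> carrier R. \<exists>y. (a \<odot>\<^bsub>M\<^esub> m, y) \<in> G}"
    define h where "h a = (THE y. (a \<odot>\<^bsub>M\<^esub> m, y) \<in> G)" for a
    have hJ: "\<And>a. a \<in> J \<Longrightarrow> (a \<odot>\<^bsub>M\<^esub> m, h a) \<in> G"
    proof -
      fix a assume "a \<in> J"
      then obtain y where y: "(a \<odot>\<^bsub>M\<^esub> m, y) \<in> G" by (auto simp: J_def)
      then have "h a = y" unfolding h_def using Guniq by blast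
      then show "(a \<odot>\<^bsub>M\<^esub> m, h a) \<in> G" using y by simp
    qed
    have Jid: "ideal J R"
    proof (rule E.ideal_byprops)
      show "J \<subseteq> carrier R" by (auto simp: J_def)
      show "\<zero> \<in> J" using G00 mc by (auto simp: J_def)
      fix a b assume a: "a \<in> J" and b: "b \<in> J"
      have "((a \<odot>\<^bsub>M\<^esub> m) \<oplus>\<^bsub>M\<^esub> (b \<odot>\<^bsub>M\<^esub> m), h a \<oplus>\<^bsub>E\<^esub> h b) \<in> G" using Gadd hJ a b by blast
      then show "a \<oplus> b \<in> J" using a b mc by (auto simp: J_def M.smult_l_distr)
    next
      fix a x assume a: "a \<in> J" and x: "x \<in> carrier R"
      have "(x \<odot>\<^bsub>M\<^esub> (a \<odot>\<^bsub>M\<^esub> m), x \<odot>\<^bsub>E\<^esub> h a) \<in> G" using Gsm hJ a x by blast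
      then show "x \<otimes> a \<in> J" using a x mc by (auto simp: J_def M.smult_assoc1)
    qed
    have "\<exists>e\<in>carrier E. \<forall>k\<in>J. h k = k \<odot>\<^bsub>E\<^esub> e"
      using bE unfolding baer_def
    proof (elim allE impE)
      show "ideal J R \<and> (\<forall>k\<in>J. h k \<in> carrier E) \<and>
        (\<forall>k\<in>J. \<forall>k'\<in>J. h (k \<oplus> k') = h k \<oplus>\<^bsub>E\<^esub> h k') \<and>
        (\<forall>t\<in>carrier R. \<forall>k\<in>J. h (t \<otimes> k) = t \<odot>\<^bsub>E\<^esub> h k)"
      proof (intro conjI ballI Jid)
        fix k assume "k \<in> J" then show "h k \<in> carrier E" using hJ Gc by blast
      next
        fix k k' assume k: "k \<in> J" and k': "k' \<in> J"
        have kk: "k \<oplus> k' \<in> J" using Jid k k' by (simp add: ideal.I_l_closed additive_subgroup.a_closed ideal.axioms(1))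
        have "((k \<odot>\<^bsub>M\<^esub> m) \<oplus>\<^bsub>M\<^esub> (k' \<odot>\<^bsub>M\<^esub> m), h k \<oplus>\<^bsub>E\<^esub> h k') \<in> G" using Gadd hJ k k' by blast
        moreover have "(k \<odot>\<^bsub>M\<^esub> m) \<oplus>\<^bsub>M\<^esub> (k' \<odot>\<^bsub>M\<^esub> m) = (k \<oplus> k') \<odot>\<^bsub>M\<^esub> m"
          using k k' mc by (auto simp: J_def M.smult_l_distr)
        ultimately show "h (k \<oplus> k') = h k \<oplus>\<^bsub>E\<^esub> h k'" using hJ[OF kk] Guniq by metis
      next
        fix t k assume t: "t \<in> carrier R" and k: "k \<in> J"
        have tk: "t \<otimes> k \<in> J" using Jid k t by (simp add: ideal.I_l_closed)
        have "(t \<odot>\<^bsub>M\<^esub> (k \<odot>\<^bsub>M\<^esub> m), t \<odot>\<^bsub>E\<^esub> h k) \<in> G" using Gsm hJ k t by blast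
        moreover have "t \<odot>\<^bsub>M\<^esub> (k \<odot>\<^bsub>M\<^esub> m) = (t \<otimes> k) \<odot>\<^bsub>M\<^esub> m"
          using k t mc by (auto simp: J_def M.smult_assoc1)
        ultimately show "h (t \<otimes> k) = t \<odot>\<^bsub>E\<^esub> h k" using hJ[OF tk] Guniq by metis
      qed
    qed
    then obtain e where ec: "e \<in> carrier E" and he: "\<And>k. k \<in> J \<Longrightarrow> h k = k \<odot>\<^bsub>E\<^esub> e" by blast
    define G' where "G' = {(x \<oplus>\<^bsub>M\<^esub> a \<odot>\<^bsub>M\<^esub> m, y \<oplus>\<^bsub>E\<^esub> a \<odot>\<^bsub>E\<^esub> e) | x y a. (x, y) \<in> G \<and> a \<in> carrier R}"
    have GG': "G \<subseteq> G'"
    proof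
      fix p assume p: "p \<in> G"
      obtain x y where pxy: "p = (x, y)" by (cases p)
      have "(x \<oplus>\<^bsub>M\<^esub> \<zero> \<odot>\<^bsub>M\<^esub> m, y \<oplus>\<^bsub>E\<^esub> \<zero> \<odot>\<^bsub>E\<^esub> e) \<in> G'"
        unfolding G'_def using p pxy by blast
      then show "p \<in> G'" using pxy Gc p mc ec by simp
    qed
    have mG': "(m, e) \<in> G'"
    proof -
      have "(\<zero>\<^bsub>M\<^esub> \<oplus>\<^bsub>M\<^esub> \<one> \<odot>\<^bsub>M\<^esub> m, \<zero>\<^bsub>E\<^esub> \<oplus>\<^bsub>E\<^esub> \<one> \<odot>\<^bsub>E\<^esub> e) \<in> G'"
        unfolding G'_def using G00 by blast
      then show ?thesis using mc ec by simp
    qed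
    have G'A: "G' \<in> A"
      unfolding A_def
    proof (intro CollectI conjI allI impI ballI)
      show "G' \<subseteq> carrier M \<times> carrier E" unfolding G'_def using Gc mc ec by auto
      fix x assume "x \<in> S" then show "(x, f x) \<in> G'" using GS GG' by blast
    next
      fix x y y' assume p1: "(x, y) \<in> G'" and p2: "(x, y') \<in> G'"
      obtain x1 y1 a1 where 1: "x = x1 \<oplus>\<^bsub>M\<^esub> a1 \<odot>\<^bsub>M\<^esub> m" "y = y1 \<oplus>\<^bsub>E\<^esub> a1 \<odot>\<^bsub>E\<^esub> e"
        "(x1, y1) \<in> G" "a1 \<in> carrier R" using p1 unfolding G'_def by blast
      obtain x2 y2 a2 where 2: "x = x2 \<oplus>\<^bsub>M\<^esub> a2 \<odot>\<^bsub>M\<^esub> m" "y' = y2 \<oplus>\<^bsub>E\<^esub> a2 \<odot>\<^bsub>E\<^esub> e"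
        "(x2, y2) \<in> G" "a2 \<in> carrier R" using p2 unfolding G'_def by blast
      have c1: "x1 \<in> carrier M" "y1 \<in> carrier E" using Gc 1(3) by auto
      have c2: "x2 \<in> carrier M" "y2 \<in> carrier E" using Gc 2(3) by auto
      define d where "d = a1 \<oplus> \<ominus> a2"
      have dc: "d \<in> carrier R" unfolding d_def using 1(4) 2(4) by simp
      have dm: "d \<odot>\<^bsub>M\<^esub> m = a1 \<odot>\<^bsub>M\<^esub> m \<oplus>\<^bsub>M\<^esub> \<ominus>\<^bsub>M\<^esub> (a2 \<odot>\<^bsub>M\<^esub> m)"
        unfolding d_def using 1(4) 2(4) mc by (simp add: M.smult_l_distr M.smult_l_minus)
      have de: "d \<odot>\<^bsub>E\<^esub> e = a1 \<odot>\<^bsub>E\<^esub> e \<oplus>\<^bsub>E\<^esub> \<ominus>\<^bsub>E\<^esub> (a2 \<odot>\<^bsub>E\<^esub> e)"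
        unfolding d_def using 1(4) 2(4) ec by (simp add: E.smult_l_distr E.smult_l_minus)
      have "a1 \<odot>\<^bsub>M\<^esub> m \<oplus>\<^bsub>M\<^esub> \<ominus>\<^bsub>M\<^esub> (a2 \<odot>\<^bsub>M\<^esub> m) = x2 \<oplus>\<^bsub>M\<^esub> \<ominus>\<^bsub>M\<^esub> x1"
        using M.ag_shift[of x1 x2 "a1 \<odot>\<^bsub>M\<^esub> m" "a2 \<odot>\<^bsub>M\<^esub> m"] 1(1) 2(1) c1 c2 1(4) 2(4) mc by simp
      then have dmx: "d \<odot>\<^bsub>M\<^esub> m = x2 \<oplus>\<^bsub>M\<^esub> \<ominus>\<^bsub>M\<^esub> x1" using dm by simp
      have inG: "(x2 \<oplus>\<^bsub>M\<^esub> \<ominus>\<^bsub>M\<^esub> x1, y2 \<oplus>\<^bsub>E\<^esub> \<ominus>\<^bsub>E\<^esub> y1) \<in> G"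
        using Gadd[OF 2(3) Gneg[OF 1(3)]] .
      have dJ: "d \<in> J" unfolding J_def using dc inG dmx by auto
      have "h d = y2 \<oplus>\<^bsub>E\<^esub> \<ominus>\<^bsub>E\<^esub> y1" using hJ[OF dJ] inG dmx Guniq by metis
      then have "a1 \<odot>\<^bsub>E\<^esub> e \<oplus>\<^bsub>E\<^esub> \<ominus>\<^bsub>E\<^esub> (a2 \<odot>\<^bsub>E\<^esub> e) = y2 \<oplus>\<^bsub>E\<^esub> \<ominus>\<^bsub>E\<^esub> y1"
        using he[OF dJ] de by simp
      then show "y = y'"
        using E.ag_shift[of y1 y2 "a1 \<odot>\<^bsub>E\<^esub> e" "a2 \<odot>\<^bsub>E\<^esub> e"] 1(2) 2(2) c1 c2 1(4) 2(4) ec by simp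
    next
      fix x y x' y' assume p1: "(x, y) \<in> G'" and p2: "(x', y') \<in> G'"
      obtain x1 y1 a1 where 1: "x = x1 \<oplus>\<^bsub>M\<^esub> a1 \<odot>\<^bsub>M\<^esub> m" "y = y1 \<oplus>\<^bsub>E\<^esub> a1 \<odot>\<^bsub>E\<^esub> e"
        "(x1, y1) \<in> G" "a1 \<in> carrier R" using p1 unfolding G'_def by blast
      obtain x2 y2 a2 where 2: "x' = x2 \<oplus>\<^bsub>M\<^esub> a2 \<odot>\<^bsub>M\<^esub> m" "y' = y2 \<oplus>\<^bsub>E\<^esub> a2 \<odot>\<^bsub>E\<^esub> e"
        "(x2, y2) \<in> G" "a2 \<in> carrier R" using p2 unfolding G'_def by blast
      have c1: "x1 \<in> carrier M" "y1 \<in> carrier E" using Gc 1(3) by auto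
      have c2: "x2 \<in> carrier M" "y2 \<in> carrier E" using Gc 2(3) by auto
      have "x \<oplus>\<^bsub>M\<^esub> x' = (x1 \<oplus>\<^bsub>M\<^esub> x2) \<oplus>\<^bsub>M\<^esub> (a1 \<oplus> a2) \<odot>\<^bsub>M\<^esub> m"
        using 1 2 c1 c2 mc by (simp add: M.ag_swap4 M.smult_l_distr)
      moreover have "y \<oplus>\<^bsub>E\<^esub> y' = (y1 \<oplus>\<^bsub>E\<^esub> y2) \<oplus>\<^bsub>E\<^esub> (a1 \<oplus> a2) \<odot>\<^bsub>E\<^esub> e"
        using 1 2 c1 c2 ec by (simp add: E.ag_swap4 E.smult_l_distr)
      moreover have "(x1 \<oplus>\<^bsub>M\<^esub> x2, y1 \<oplus>\<^bsub>E\<^esub> y2) \<in> G" using Gadd 1(3) 2(3) by blast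
      moreover have "a1 \<oplus> a2 \<in> carrier R" using 1(4) 2(4) by simp
      ultimately show "(x \<oplus>\<^bsub>M\<^esub> x', y \<oplus>\<^bsub>E\<^esub> y') \<in> G'" unfolding G'_def by blast
    next
      fix c x y assume c: "c \<in> carrier R" and p1: "(x, y) \<in> G'"
      obtain x1 y1 a1 where 1: "x = x1 \<oplus>\<^bsub>M\<^esub> a1 \<odot>\<^bsub>M\<^esub> m" "y = y1 \<oplus>\<^bsub>E\<^esub> a1 \<odot>\<^bsub>E\<^esub> e"
        "(x1, y1) \<in> G" "a1 \<in> carrier R" using p1 unfolding G'_def by blast
      have c1: "x1 \<in> carrier M" "y1 \<in> carrier E" using Gc 1(3) by auto
      have "c \<odot>\<^bsub>M\<^esub> x = c \<odot>\<^bsub>M\<^esub> x1 \<oplus>\<^bsub>M\<^esub> (c \<otimes> a1) \<odot>\<^bsub>M\<^esub> m"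
        using 1 c1 c mc by (simp add: M.smult_r_distr M.smult_assoc1)
      moreover have "c \<odot>\<^bsub>E\<^esub> y = c \<odot>\<^bsub>E\<^esub> y1 \<oplus>\<^bsub>E\<^esub> (c \<otimes> a1) \<odot>\<^bsub>E\<^esub> e"
        using 1 c1 c ec by (simp add: E.smult_r_distr E.smult_assoc1)
      moreover have "(c \<odot>\<^bsub>M\<^esub> x1, c \<odot>\<^bsub>E\<^esub> y1) \<in> G" using Gsm c 1(3) by blast
      moreover have "c \<otimes> a1 \<in> carrier R" using c 1(4) by simp
      ultimately show "(c \<odot>\<^bsub>M\<^esub> x, c \<odot>\<^bsub>E\<^esub> y) \<in> G'" unfolding G'_def by blast
    qed
    have "G' = G" using Gmax G'A GG' by blast
    then show False using mG' mD by blast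
  qed
  define g where "g x = (THE y. (x, y) \<in> G)" for x
  have gG: "\<And>x. x \<in> carrier M \<Longrightarrow> (x, g x) \<in> G"
  proof -
    fix x assume "x \<in> carrier M"
    then obtain y where y: "(x, y) \<in> G" using Dfull by blast
    then have "g x = y" unfolding g_def using Guniq by blast
    then show "(x, g x) \<in> G" using y by simp
  qed
  show ?thesis
  proof (intro exI conjI ballI)
    show "lin_on R M (carrier M) E g"
      unfolding lin_on_def
    proof (intro conjI ballI)
      fix x assume "x \<in> carrier M" then show "g x \<in> carrier E" using gG Gc by blast
    next
      fix x y assume x: "x \<in> carrier M" and y: "y \<in> carrier M"
      show "g (x \<oplus>\<^bsub>M\<^esub> y) = g x \<oplus>\<^bsub>E\<^esub> g y"
        using Gadd[OF gG[OF x] gG[OF y]] gG[of "x \<oplus>\<^bsub>M\<^esub> y"] x y Guniq by blast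
    next
      fix a x assume a: "a \<in> carrier R" and x: "x \<in> carrier M"
      show "g (a \<odot>\<^bsub>M\<^esub> x) = a \<odot>\<^bsub>E\<^esub> g x"
        using Gsm[OF a gG[OF x]] gG[of "a \<odot>\<^bsub>M\<^esub> x"] a x Guniq by blast
    qed
  next
    fix x assume x: "x \<in> S"
    then show "g x = f x" using GS[OF x] gG[of x] Ssub Guniq by blast
  qed
qed



lemma (in abelian_group) diff_zero_eq:
  assumes "u \<in> carrier G" "v \<in> carrier G" "u \<oplus> \<ominus> v = \<zero>"
  shows "u = v"
proof -
  have "\<ominus> (\<ominus> v) = u" using minus_equality[OF assms(3)] assms by simp
  then show ?thesis using assms by simp
qed

lemma smult_sub_zero:
  fixes R (structure)
  assumes "module R E" "c \<in> carrier R" "r \<in> carrier R" "c \<otimes> r = \<zero>" "z \<in> smult_sub E r"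
  shows "c \<odot>\<^bsub>E\<^esub> z = \<zero>\<^bsub>E\<^esub>"
proof -
  interpret module R E by fact
  obtain y where y: "y \<in> carrier E" "z = r \<odot>\<^bsub>E\<^esub> y" using assms(5) by (auto simp: smult_sub_def)
  have "c \<odot>\<^bsub>E\<^esub> z = (c \<otimes> r) \<odot>\<^bsub>E\<^esub> y" using y assms(2,3) by (simp add: smult_assoc1)
  then show ?thesis using assms y by simp
qed

lemma smult_sub_subgroup:
  fixes R (structure)
  assumes "module R E" "r \<in> carrier R"
  shows "abelian_subgroup (smult_sub E r) E"
proof -
  interpret module R E by fact
  have "additive_subgroup (smult_sub E r) E"
  proof (rule additive_subgroupI, unfold_locales)
    show "smult_sub E r \<subseteq> carrier (add_monoid E)" using assms by (auto simp: smult_sub_def)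
    fix x y assume "x \<in> smult_sub E r" "y \<in> smult_sub E r"
    then obtain u v where "u \<in> carrier E" "v \<in> carrier E" "x = r \<odot>\<^bsub>E\<^esub> u" "y = r \<odot>\<^bsub>E\<^esub> v"
      by (auto simp: smult_sub_def)
    then show "x \<otimes>\<^bsub>add_monoid E\<^esub> y \<in> smult_sub E r" using assms
      by (auto simp: smult_sub_def smult_r_distr intro!: exI[of _ "u \<oplus>\<^bsub>E\<^esub> v"])
  next
    show "\<one>\<^bsub>add_monoid E\<^esub> \<in> smult_sub E r" using assms
      by (auto simp: smult_sub_def intro!: exI[of _ "\<zero>\<^bsub>E\<^esub>"])
  next
    fix x assume "x \<in> smult_sub E r"
    then obtain u where "u \<in> carrier E" "x = r \<odot>\<^bsub>E\<^esub> u" by (auto simp: smult_sub_def)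
    then show "inv\<^bsub>add_monoid E\<^esub> x \<in> smult_sub E r" using assms
      by (auto simp: smult_sub_def smult_r_minus a_inv_def[symmetric] intro!: exI[of _ "\<ominus>\<^bsub>E\<^esub> u"])
  qed
  then show ?thesis using abelian_subgroupI3 module.axioms(2)[OF assms(1)] by blast
qed

lemma (in cring) principal_comparable:
  assumes "\<forall>I J. ideal I R \<and> ideal J R \<longrightarrow> I \<subseteq> J \<or> J \<subseteq> I"
    and "a \<in> carrier R" "b \<in> carrier R"
  shows "(\<exists>d\<in>carrier R. a = d \<otimes> b) \<or> (\<exists>d\<in>carrier R. b = d \<otimes> a)"
proof -
  have "PIdl a \<subseteq> PIdl b \<or> PIdl b \<subseteq> PIdl a" using assms cgenideal_ideal by blast
  moreover have "a \<in> PIdl a" "b \<in> PIdl b" using assms cgenideal_self by auto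
  ultimately show ?thesis unfolding cgenideal_def by blast
qed

lemma divisible_lemma:
  fixes R (structure)
  assumes "cring R" "module R E" "baer R E" "r \<in> carrier R" "z \<in> carrier E"
    and ann: "\<And>c. c \<in> carrier R \<Longrightarrow> c \<otimes> r = \<zero> \<Longrightarrow> c \<odot>\<^bsub>E\<^esub> z = \<zero>\<^bsub>E\<^esub>"
  shows "z \<in> smult_sub E r"
proof -
  interpret cring R by fact
  interpret E: module R E by fact
  have wd: "t \<odot>\<^bsub>E\<^esub> z = t' \<odot>\<^bsub>E\<^esub> z" if "t \<in> carrier R" "t' \<in> carrier R" "t \<otimes> r = t' \<otimes> r" for t t'
  proof -
    have "(t \<oplus> \<ominus> t') \<otimes> r = \<zero>" using that assms(4) by (simp add: l_distr l_minus r_neg)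
    then have "(t \<oplus> \<ominus> t') \<odot>\<^bsub>E\<^esub> z = \<zero>\<^bsub>E\<^esub>" using ann that by simp
    then have "t \<odot>\<^bsub>E\<^esub> z \<oplus>\<^bsub>E\<^esub> \<ominus>\<^bsub>E\<^esub> (t' \<odot>\<^bsub>E\<^esub> z) = \<zero>\<^bsub>E\<^esub>"
      using that assms(5) by (simp add: E.smult_l_distr E.smult_l_minus)
    then show ?thesis using that assms(5) by (simp add: E.diff_zero_eq)
  qed
  define \<psi> where "\<psi> k = (SOME v. \<exists>t\<in>carrier R. k = t \<otimes> r \<and> v = t \<odot>\<^bsub>E\<^esub> z)" for k
  have \<psi>eq: "\<psi> (t \<otimes> r) = t \<odot>\<^bsub>E\<^esub> z" if t: "t \<in> carrier R" for t
  proof -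
    have "\<exists>v. \<exists>t'\<in>carrier R. t \<otimes> r = t' \<otimes> r \<and> v = t' \<odot>\<^bsub>E\<^esub> z" using t by blast
    then have "\<exists>t'\<in>carrier R. t \<otimes> r = t' \<otimes> r \<and> \<psi> (t \<otimes> r) = t' \<odot>\<^bsub>E\<^esub> z"
      unfolding \<psi>_def by (rule someI_ex)
    then show ?thesis using wd t by metis
  qed
  have PI: "\<And>k. k \<in> PIdl r \<Longrightarrow> \<exists>t\<in>carrier R. k = t \<otimes> r" by (auto simp: cgenideal_def)
  have "\<exists>e\<in>carrier E. \<forall>k\<in>PIdl r. \<psi> k = k \<odot>\<^bsub>E\<^esub> e"
    using assms(3) unfolding baer_def
  proof (elim allE impE)
    show "ideal (PIdl r) R \<and> (\<forall>k\<in>PIdl r. \<psi> k \<in> carrier E) \<and>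
        (\<forall>k\<in>PIdl r. \<forall>k'\<in>PIdl r. \<psi> (k \<oplus> k') = \<psi> k \<oplus>\<^bsub>E\<^esub> \<psi> k') \<and>
        (\<forall>t\<in>carrier R. \<forall>k\<in>PIdl r. \<psi> (t \<otimes> k) = t \<odot>\<^bsub>E\<^esub> \<psi> k)"
    proof (intro conjI ballI)
      show "ideal (PIdl r) R" using assms(4) by (rule cgenideal_ideal)
    next
      fix k assume "k \<in> PIdl r"
      then obtain t where "t \<in> carrier R" "k = t \<otimes> r" using PI by blast
      then show "\<psi> k \<in> carrier E" using \<psi>eq assms(5) by simp
    next
      fix k k' assume "k \<in> PIdl r" "k' \<in> PIdl r"
      then obtain t t' where t: "t \<in> carrier R" "k = t \<otimes> r" "t' \<in> carrier R" "k' = t' \<otimes> r"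
        using PI by blast
      then have "k \<oplus> k' = (t \<oplus> t') \<otimes> r" using assms(4) by (simp add: l_distr)
      then show "\<psi> (k \<oplus> k') = \<psi> k \<oplus>\<^bsub>E\<^esub> \<psi> k'"
        using t \<psi>eq assms(5) by (simp add: E.smult_l_distr)
    next
      fix s k assume s: "s \<in> carrier R" and "k \<in> PIdl r"
      then obtain t where t: "t \<in> carrier R" "k = t \<otimes> r" using PI by blast
      then have "s \<otimes> k = (s \<otimes> t) \<otimes> r" using s assms(4) by (simp add: m_assoc)
      then show "\<psi> (s \<otimes> k) = s \<odot>\<^bsub>E\<^esub> \<psi> k"
        using t s \<psi>eq assms(5) by (simp add: E.smult_assoc1)
    qed
  qed
  then obtain e where e: "e \<in> carrier E" "\<And>k. k \<in> PIdl r \<Longrightarrow> \<psi> k = k \<odot>\<^bsub>E\<^esub> e" by blast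
  have "r \<in> PIdl r" using assms(4) by (rule cgenideal_self)
  then have "\<psi> (\<one> \<otimes> r) = r \<odot>\<^bsub>E\<^esub> e" using e assms(4) by simp
  then have "z = r \<odot>\<^bsub>E\<^esub> e" using \<psi>eq[of \<one>] assms(5) by simp
  then show ?thesis using e(1) by (auto simp: smult_sub_def)
qed


lemma core_lemma:
  fixes R (structure)
  assumes val: "valuation_ring R" and modE: "module R E" and bE: "baer R E" and r: "r \<in> carrier R"
    and J: "ideal J R" and IJ: "PIdl r \<subseteq> J"
    and xc: "\<And>a. a \<in> J \<Longrightarrow> x a \<in> carrier E"
    and xi: "\<And>a b. a \<in> J \<Longrightarrow> b \<in> carrier R \<Longrightarrow>
               b \<odot>\<^bsub>E\<^esub> x a \<oplus>\<^bsub>E\<^esub> \<ominus>\<^bsub>E\<^esub> x (b \<otimes> a) \<in> smult_sub E r"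
    and xiii: "\<And>a. a \<in> PIdl r \<Longrightarrow> x a \<in> smult_sub E r"
  shows "\<exists>e\<in>carrier E. \<forall>a\<in>J. a \<odot>\<^bsub>E\<^esub> e \<oplus>\<^bsub>E\<^esub> \<ominus>\<^bsub>E\<^esub> x a \<in> smult_sub E r"
proof -
  have cr: "cring R" and tot: "\<forall>I J. ideal I R \<and> ideal J R \<longrightarrow> I \<subseteq> J \<or> J \<subseteq> I"
    using val by (auto simp: valuation_ring_def)
  interpret cring R by fact
  interpret E: module R E by fact
  interpret J: ideal J R by fact
  define N where "N = smult_sub E r"
  interpret N: abelian_subgroup N E unfolding N_def using smult_sub_subgroup[OF modE r] .
  have Nz: "\<And>c z. c \<in> carrier R \<Longrightarrow> c \<otimes> r = \<zero> \<Longrightarrow> z \<in> N \<Longrightarrow> c \<odot>\<^bsub>E\<^esub> z = \<zero>\<^bsub>E\<^esub>"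
    unfolding N_def using smult_sub_zero[OF modE _ r] by blast
  have Jc: "\<And>a. a \<in> J \<Longrightarrow> a \<in> carrier R" using J.a_subset by blast
  have cmp: "\<And>a b. a \<in> carrier R \<Longrightarrow> b \<in> carrier R \<Longrightarrow>
      (\<exists>d\<in>carrier R. a = d \<otimes> b) \<or> (\<exists>d\<in>carrier R. b = d \<otimes> a)"
    using principal_comparable[OF tot] by blast
  have PIr: "\<And>d. d \<in> carrier R \<Longrightarrow> d \<otimes> r \<in> PIdl r" by (auto simp: cgenideal_def)
  have H1: "b \<odot>\<^bsub>E\<^esub> x a \<in> N" if a: "a \<in> J" and b: "b \<in> carrier R" and ba: "b \<otimes> a \<in> PIdl r" for a b
  proof -
    have u: "b \<odot>\<^bsub>E\<^esub> x a \<oplus>\<^bsub>E\<^esub> \<ominus>\<^bsub>E\<^esub> x (b \<otimes> a) \<in> N" using xi[OF a b] N_def by simp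
    have v: "x (b \<otimes> a) \<in> N" using xiii[OF ba] N_def by simp
    have "(b \<odot>\<^bsub>E\<^esub> x a \<oplus>\<^bsub>E\<^esub> \<ominus>\<^bsub>E\<^esub> x (b \<otimes> a)) \<oplus>\<^bsub>E\<^esub> x (b \<otimes> a) \<in> N"
      using u v by simp
    moreover have "b \<otimes> a \<in> J" using J.I_l_closed a b by simp
    ultimately show ?thesis using xc[OF a] xc[of "b \<otimes> a"] a b by (simp add: E.a_assoc E.l_neg)
  qed
  have S1: "b \<odot>\<^bsub>E\<^esub> x a = \<zero>\<^bsub>E\<^esub>"
    if a: "a \<in> J" and b: "b \<in> carrier R" and ba: "b \<otimes> a = \<zero>" and br: "b \<otimes> r = \<zero>" for a b
  proof -
    have ac: "a \<in> carrier R" using Jc a .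
    from cmp[OF ac r] show ?thesis
    proof
      assume "\<exists>d\<in>carrier R. a = d \<otimes> r"
      then have "a \<in> PIdl r" using PIr by blast
      then have "x a \<in> N" using xiii N_def by simp
      then show ?thesis using Nz b br by blast
    next
      assume "\<exists>s\<in>carrier R. r = s \<otimes> a"
      then obtain s where s: "s \<in> carrier R" and rs: "r = s \<otimes> a" by blast
      define Ann where "Ann = {c \<in> carrier R. c \<otimes> a = \<zero>}"
      have AnnI: "ideal Ann R"
      proof (rule ideal_byprops)
        show "Ann \<subseteq> carrier R" "\<zero> \<in> Ann" using ac by (auto simp: Ann_def)
        fix c c' assume "c \<in> Ann" "c' \<in> Ann"
        then show "c \<oplus> c' \<in> Ann" using ac by (auto simp: Ann_def l_distr)
      next
        fix c t assume "c \<in> Ann" "t \<in> carrier R"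
        then show "t \<otimes> c \<in> Ann" using ac by (auto simp: Ann_def m_assoc)
      qed
      have "Ann \<subseteq> PIdl s \<or> PIdl s \<subseteq> Ann" using tot AnnI cgenideal_ideal[OF s] by blast
      then show ?thesis
      proof
        assume "Ann \<subseteq> PIdl s"
        moreover have "b \<in> Ann" using b ba by (simp add: Ann_def)
        ultimately obtain c where c: "c \<in> carrier R" "b = c \<otimes> s" by (auto simp: cgenideal_def)
        have "r \<in> PIdl r" using r by (rule cgenideal_self)
        then have "s \<otimes> a \<in> PIdl r" unfolding rs[symmetric] .
        then have "s \<odot>\<^bsub>E\<^esub> x a \<in> N" using H1[OF a s] by blast
        then obtain y where y: "y \<in> carrier E" "s \<odot>\<^bsub>E\<^esub> x a = r \<odot>\<^bsub>E\<^esub> y"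
          unfolding N_def smult_sub_def by blast
        have "b \<odot>\<^bsub>E\<^esub> x a = c \<odot>\<^bsub>E\<^esub> (s \<odot>\<^bsub>E\<^esub> x a)" using c s xc[OF a] by (simp add: E.smult_assoc1)
        also have "\<dots> = c \<odot>\<^bsub>E\<^esub> ((s \<otimes> a) \<odot>\<^bsub>E\<^esub> y)" by (simp only: y(2) rs)
        also have "\<dots> = ((c \<otimes> s) \<otimes> a) \<odot>\<^bsub>E\<^esub> y" using c s ac y by (simp add: E.smult_assoc1 m_assoc)
        also have "\<dots> = \<zero>\<^bsub>E\<^esub>" using c ba y by simp
        finally show ?thesis .
      next
        assume "PIdl s \<subseteq> Ann"
        then have "s \<in> Ann" using cgenideal_self[OF s] by blast
        then have r0: "r = \<zero>" using rs by (simp add: Ann_def)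
        have "b \<odot>\<^bsub>E\<^esub> x a \<in> N" using H1[OF a b] ba PIr[of \<zero>] r0 by simp
        then obtain y where "y \<in> carrier E" "b \<odot>\<^bsub>E\<^esub> x a = r \<odot>\<^bsub>E\<^esub> y"
          unfolding N_def smult_sub_def by blast
        then show ?thesis using r0 by simp
      qed
    qed
  qed
  have V: "c \<odot>\<^bsub>E\<^esub> x (d \<otimes> a) = c \<odot>\<^bsub>E\<^esub> (d \<odot>\<^bsub>E\<^esub> x a)"
    if a: "a \<in> J" and d: "d \<in> carrier R" and c: "c \<in> carrier R" and cr: "c \<otimes> r = \<zero>" for a d c
  proof -
    have da: "d \<otimes> a \<in> J" using J.I_l_closed a d by simp
    have w: "d \<odot>\<^bsub>E\<^esub> x a \<oplus>\<^bsub>E\<^esub> \<ominus>\<^bsub>E\<^esub> x (d \<otimes> a) \<in> N" using xi[OF a d] N_def by simp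
    have "c \<odot>\<^bsub>E\<^esub> (d \<odot>\<^bsub>E\<^esub> x a \<oplus>\<^bsub>E\<^esub> \<ominus>\<^bsub>E\<^esub> x (d \<otimes> a)) = \<zero>\<^bsub>E\<^esub>" using Nz[OF c cr w] .
    then have "c \<odot>\<^bsub>E\<^esub> (d \<odot>\<^bsub>E\<^esub> x a) \<oplus>\<^bsub>E\<^esub> \<ominus>\<^bsub>E\<^esub> (c \<odot>\<^bsub>E\<^esub> x (d \<otimes> a)) = \<zero>\<^bsub>E\<^esub>"
      using c d xc[OF a] xc[OF da] by (simp add: E.smult_r_distr E.smult_r_minus)
    then have "c \<odot>\<^bsub>E\<^esub> (d \<odot>\<^bsub>E\<^esub> x a) = c \<odot>\<^bsub>E\<^esub> x (d \<otimes> a)"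
      using c d xc[OF a] xc[OF da] E.diff_zero_eq by simp
    then show ?thesis by (rule sym)
  qed
  have W1: "c \<odot>\<^bsub>E\<^esub> x a = c' \<odot>\<^bsub>E\<^esub> x (d \<otimes> a)"
    if a: "a \<in> J" and d: "d \<in> carrier R" and c: "c \<in> carrier R" and cr: "c \<otimes> r = \<zero>"
      and c': "c' \<in> carrier R" and c'r: "c' \<otimes> r = \<zero>" and eq: "c \<otimes> a = c' \<otimes> (d \<otimes> a)" for a d c c'
  proof -
    have ac: "a \<in> carrier R" using Jc a .
    define b where "b = c \<oplus> \<ominus> (c' \<otimes> d)"
    have bc: "b \<in> carrier R" using c c' d by (simp add: b_def)
    have "b \<otimes> a = c \<otimes> a \<oplus> \<ominus> (c' \<otimes> (d \<otimes> a))" unfolding b_def using c c' d ac by algebra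
    then have ba: "b \<otimes> a = \<zero>" using eq c' d ac by (simp add: r_neg)
    have "b \<otimes> r = c \<otimes> r \<oplus> \<ominus> (d \<otimes> (c' \<otimes> r))" unfolding b_def using c c' d r by algebra
    then have br: "b \<otimes> r = \<zero>" using cr c'r d by simp
    have "b \<odot>\<^bsub>E\<^esub> x a = \<zero>\<^bsub>E\<^esub>" using S1[OF a bc ba br] .
    then have "c \<odot>\<^bsub>E\<^esub> x a \<oplus>\<^bsub>E\<^esub> \<ominus>\<^bsub>E\<^esub> ((c' \<otimes> d) \<odot>\<^bsub>E\<^esub> x a) = \<zero>\<^bsub>E\<^esub>"
      unfolding b_def using c c' d xc[OF a] by (simp add: E.smult_l_distr E.smult_l_minus)
    then have "c \<odot>\<^bsub>E\<^esub> x a = (c' \<otimes> d) \<odot>\<^bsub>E\<^esub> x a" using c c' d xc[OF a] E.diff_zero_eq by simp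
    also have "\<dots> = c' \<odot>\<^bsub>E\<^esub> x (d \<otimes> a)" using V[OF a d c' c'r] c' d xc[OF a] by (simp add: E.smult_assoc1)
    finally show ?thesis .
  qed
  have W: "c \<odot>\<^bsub>E\<^esub> x a = c' \<odot>\<^bsub>E\<^esub> x a'"
    if a: "a \<in> J" and a': "a' \<in> J" and c: "c \<in> carrier R" and cr: "c \<otimes> r = \<zero>"
      and c': "c' \<in> carrier R" and c'r: "c' \<otimes> r = \<zero>" and eq: "c \<otimes> a = c' \<otimes> a'" for a a' c c'
  proof -
    from cmp[OF Jc[OF a'] Jc[OF a]] show ?thesis
    proof
      assume "\<exists>d\<in>carrier R. a' = d \<otimes> a"
      then obtain d where "d \<in> carrier R" "a' = d \<otimes> a" by blast
      then show ?thesis using W1[OF a _ c cr c' c'r] eq by blast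
    next
      assume "\<exists>d\<in>carrier R. a = d \<otimes> a'"
      then obtain d where "d \<in> carrier R" "a = d \<otimes> a'" by blast
      then show ?thesis using W1[OF a' _ c' c'r c cr] eq by metis
    qed
  qed
  define K where "K = {c \<otimes> a | c a. c \<in> carrier R \<and> c \<otimes> r = \<zero> \<and> a \<in> J}"
  define \<psi> where "\<psi> k = (SOME v. \<exists>c a. c \<in> carrier R \<and> c \<otimes> r = \<zero> \<and> a \<in> J \<and> k = c \<otimes> a \<and> v = c \<odot>\<^bsub>E\<^esub> x a)" for k
  have \<psi>eq: "\<psi> (c \<otimes> a) = c \<odot>\<^bsub>E\<^esub> x a" if c: "c \<in> carrier R" "c \<otimes> r = \<zero>" and a: "a \<in> J" for c a
  proof -
    have "\<exists>v. \<exists>c' a'. c' \<in> carrier R \<and> c' \<otimes> r = \<zero> \<and> a' \<in> J \<and> c \<otimes> a = c' \<otimes> a' \<and> v = c' \<odot>\<^bsub>E\<^esub> x a'"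
      using c a by blast
    then have "\<exists>c' a'. c' \<in> carrier R \<and> c' \<otimes> r = \<zero> \<and> a' \<in> J \<and> c \<otimes> a = c' \<otimes> a' \<and> \<psi> (c \<otimes> a) = c' \<odot>\<^bsub>E\<^esub> x a'"
      unfolding \<psi>_def by (rule someI_ex)
    then show ?thesis using W[OF a _ c] by metis
  qed
  have Kadd: "\<exists>c'' a''. c'' \<in> carrier R \<and> c'' \<otimes> r = \<zero> \<and> a'' \<in> J \<and> c \<otimes> a \<oplus> c' \<otimes> a' = c'' \<otimes> a''
        \<and> c'' \<odot>\<^bsub>E\<^esub> x a'' = c \<odot>\<^bsub>E\<^esub> x a \<oplus>\<^bsub>E\<^esub> c' \<odot>\<^bsub>E\<^esub> x a'"
    if a: "a \<in> J" and a': "a' \<in> J" and c: "c \<in> carrier R" and cr: "c \<otimes> r = \<zero>"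
      and c': "c' \<in> carrier R" and c'r: "c' \<otimes> r = \<zero>" for a a' c c'
  proof -
    have gen: "\<exists>c'' a''. c'' \<in> carrier R \<and> c'' \<otimes> r = \<zero> \<and> a'' \<in> J \<and> c1 \<otimes> a1 \<oplus> c2 \<otimes> (d \<otimes> a1) = c'' \<otimes> a''
        \<and> c'' \<odot>\<^bsub>E\<^esub> x a'' = c1 \<odot>\<^bsub>E\<^esub> x a1 \<oplus>\<^bsub>E\<^esub> c2 \<odot>\<^bsub>E\<^esub> x (d \<otimes> a1)"
      if a1: "a1 \<in> J" and d: "d \<in> carrier R" and c1: "c1 \<in> carrier R" "c1 \<otimes> r = \<zero>"
        and c2: "c2 \<in> carrier R" "c2 \<otimes> r = \<zero>" for a1 d c1 c2
    proof (intro exI conjI)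
      have a1c: "a1 \<in> carrier R" using Jc a1 .
      show "c1 \<oplus> c2 \<otimes> d \<in> carrier R" using c1 c2 d by simp
      have "(c1 \<oplus> c2 \<otimes> d) \<otimes> r = c1 \<otimes> r \<oplus> d \<otimes> (c2 \<otimes> r)" using c1(1) c2(1) d r by algebra
      also have "\<dots> = \<zero> \<oplus> d \<otimes> \<zero>" by (simp only: c1(2) c2(2))
      also have "\<dots> = \<zero>" using d by simp
      finally show "(c1 \<oplus> c2 \<otimes> d) \<otimes> r = \<zero>" .
      show "a1 \<in> J" by fact
      show "c1 \<otimes> a1 \<oplus> c2 \<otimes> (d \<otimes> a1) = (c1 \<oplus> c2 \<otimes> d) \<otimes> a1" using c1 c2 d a1c by algebra
      have "(c1 \<oplus> c2 \<otimes> d) \<odot>\<^bsub>E\<^esub> x a1 = c1 \<odot>\<^bsub>E\<^esub> x a1 \<oplus>\<^bsub>E\<^esub> c2 \<odot>\<^bsub>E\<^esub> (d \<odot>\<^bsub>E\<^esub> x a1)"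
        using c1 c2 d xc[OF a1] by (simp add: E.smult_l_distr E.smult_assoc1)
      then show "(c1 \<oplus> c2 \<otimes> d) \<odot>\<^bsub>E\<^esub> x a1 = c1 \<odot>\<^bsub>E\<^esub> x a1 \<oplus>\<^bsub>E\<^esub> c2 \<odot>\<^bsub>E\<^esub> x (d \<otimes> a1)"
        using V[OF a1 d c2(1) c2(2)] by simp
    qed
    from cmp[OF Jc[OF a'] Jc[OF a]] show ?thesis
    proof
      assume "\<exists>d\<in>carrier R. a' = d \<otimes> a"
      then obtain d where "d \<in> carrier R" "a' = d \<otimes> a" by blast
      then show ?thesis using gen[OF a _ c cr c' c'r] by blast
    next
      assume "\<exists>d\<in>carrier R. a = d \<otimes> a'"
      then obtain d where d: "d \<in> carrier R" "a = d \<otimes> a'" by blast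
      obtain c'' a'' where h: "c'' \<in> carrier R" "c'' \<otimes> r = \<zero>" "a'' \<in> J"
        "c' \<otimes> a' \<oplus> c \<otimes> (d \<otimes> a') = c'' \<otimes> a''"
        "c'' \<odot>\<^bsub>E\<^esub> x a'' = c' \<odot>\<^bsub>E\<^esub> x a' \<oplus>\<^bsub>E\<^esub> c \<odot>\<^bsub>E\<^esub> x (d \<otimes> a')"
        using gen[OF a' d(1) c' c'r c cr] by blast
      have "c \<otimes> a \<oplus> c' \<otimes> a' = c'' \<otimes> a''" using h(4) d c c' Jc[OF a'] by (simp add: a_comm)
      moreover have "c'' \<odot>\<^bsub>E\<^esub> x a'' = c \<odot>\<^bsub>E\<^esub> x a \<oplus>\<^bsub>E\<^esub> c' \<odot>\<^bsub>E\<^esub> x a'"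
        using h(5) d c c' xc a a' by (simp add: E.a_comm)
      ultimately show ?thesis using h(1-3) by blast
    qed
  qed
  have "\<exists>e\<in>carrier E. \<forall>k\<in>K. \<psi> k = k \<odot>\<^bsub>E\<^esub> e"
    using bE unfolding baer_def
  proof (elim allE impE)
    show "ideal K R \<and> (\<forall>k\<in>K. \<psi> k \<in> carrier E) \<and>
        (\<forall>k\<in>K. \<forall>k'\<in>K. \<psi> (k \<oplus> k') = \<psi> k \<oplus>\<^bsub>E\<^esub> \<psi> k') \<and>
        (\<forall>t\<in>carrier R. \<forall>k\<in>K. \<psi> (t \<otimes> k) = t \<odot>\<^bsub>E\<^esub> \<psi> k)"
    proof (intro conjI ballI)
      show "ideal K R"
      proof (rule ideal_byprops)
        show "K \<subseteq> carrier R" using Jc by (auto simp: K_def)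
        have "\<zero> \<otimes> \<zero> \<in> K" unfolding K_def using r J.Icarr[OF J.zero_closed] by (intro CollectI exI[of _ \<zero>] conjI) auto
        then show "\<zero> \<in> K" by simp
      next
        fix k k' assume "k \<in> K" "k' \<in> K"
        then obtain c a c' a' where h: "c \<in> carrier R" "c \<otimes> r = \<zero>" "a \<in> J" "k = c \<otimes> a"
          "c' \<in> carrier R" "c' \<otimes> r = \<zero>" "a' \<in> J" "k' = c' \<otimes> a'" unfolding K_def by blast
        obtain c'' a'' where h2: "c'' \<in> carrier R" "c'' \<otimes> r = \<zero>" "a'' \<in> J" "k \<oplus> k' = c'' \<otimes> a''"
          using Kadd[OF h(3) h(7) h(1) h(2) h(5) h(6)] h(4) h(8) by blast
        then show "k \<oplus> k' \<in> K" unfolding K_def by blast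
      next
        fix k t assume "k \<in> K" and t: "t \<in> carrier R"
        then obtain c a where ca: "c \<in> carrier R" "c \<otimes> r = \<zero>" "a \<in> J" "k = c \<otimes> a" unfolding K_def by blast
        have "t \<otimes> k = (t \<otimes> c) \<otimes> a" using ca t Jc by (simp add: m_assoc)
        moreover have "(t \<otimes> c) \<otimes> r = \<zero>" using ca t r by (simp add: m_assoc)
        ultimately show "t \<otimes> k \<in> K" using ca t unfolding K_def by blast
      qed
    next
      fix k assume "k \<in> K"
      then obtain c a where ca: "c \<in> carrier R" "c \<otimes> r = \<zero>" "a \<in> J" "k = c \<otimes> a" unfolding K_def by blast
      then show "\<psi> k \<in> carrier E" using \<psi>eq xc by simp
    next
      fix k k' assume "k \<in> K" "k' \<in> K"
      then obtain c a c' a' where h: "c \<in> carrier R" "c \<otimes> r = \<zero>" "a \<in> J" "k = c \<otimes> a"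
          "c' \<in> carrier R" "c' \<otimes> r = \<zero>" "a' \<in> J" "k' = c' \<otimes> a'" unfolding K_def by blast
      obtain c'' a'' where h2: "c'' \<in> carrier R" "c'' \<otimes> r = \<zero>" "a'' \<in> J" "k \<oplus> k' = c'' \<otimes> a''"
        "c'' \<odot>\<^bsub>E\<^esub> x a'' = c \<odot>\<^bsub>E\<^esub> x a \<oplus>\<^bsub>E\<^esub> c' \<odot>\<^bsub>E\<^esub> x a'"
        using Kadd[OF h(3) h(7) h(1) h(2) h(5) h(6)] h(4) h(8) by blast
      show "\<psi> (k \<oplus> k') = \<psi> k \<oplus>\<^bsub>E\<^esub> \<psi> k'"
        using h2 h \<psi>eq by simp
    next
      fix t k assume t: "t \<in> carrier R" and "k \<in> K"
      then obtain c a where ca: "c \<in> carrier R" "c \<otimes> r = \<zero>" "a \<in> J" "k = c \<otimes> a" unfolding K_def by blast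
      have "t \<otimes> k = (t \<otimes> c) \<otimes> a" using ca t Jc by (simp add: m_assoc)
      moreover have "(t \<otimes> c) \<otimes> r = \<zero>" using ca t r by (simp add: m_assoc)
      ultimately have "\<psi> (t \<otimes> k) = (t \<otimes> c) \<odot>\<^bsub>E\<^esub> x a" using \<psi>eq ca t by simp
      then show "\<psi> (t \<otimes> k) = t \<odot>\<^bsub>E\<^esub> \<psi> k" using ca t \<psi>eq xc by (simp add: E.smult_assoc1)
    qed
  qed
  then obtain e where ec: "e \<in> carrier E" and he: "\<And>k. k \<in> K \<Longrightarrow> \<psi> k = k \<odot>\<^bsub>E\<^esub> e" by blast
  show ?thesis
  proof (intro bexI[OF _ ec] ballI)
    fix a assume a: "a \<in> J"
    have ac: "a \<in> carrier R" using Jc a .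
    show "a \<odot>\<^bsub>E\<^esub> e \<oplus>\<^bsub>E\<^esub> \<ominus>\<^bsub>E\<^esub> x a \<in> smult_sub E r"
    proof (rule divisible_lemma[OF cr modE bE r])
      show "a \<odot>\<^bsub>E\<^esub> e \<oplus>\<^bsub>E\<^esub> \<ominus>\<^bsub>E\<^esub> x a \<in> carrier E" using ac ec xc[OF a] by simp
      fix c assume c: "c \<in> carrier R" and cr: "c \<otimes> r = \<zero>"
      have k: "c \<otimes> a \<in> K" using c cr a unfolding K_def by blast
      have "c \<odot>\<^bsub>E\<^esub> x a = (c \<otimes> a) \<odot>\<^bsub>E\<^esub> e" using he[OF k] \<psi>eq[OF c cr a] by simp
      also have "\<dots> = c \<odot>\<^bsub>E\<^esub> (a \<odot>\<^bsub>E\<^esub> e)" using c ac ec by (simp add: E.smult_assoc1)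
      finally have eq: "c \<odot>\<^bsub>E\<^esub> x a = c \<odot>\<^bsub>E\<^esub> (a \<odot>\<^bsub>E\<^esub> e)" .
      have "c \<odot>\<^bsub>E\<^esub> (a \<odot>\<^bsub>E\<^esub> e \<oplus>\<^bsub>E\<^esub> \<ominus>\<^bsub>E\<^esub> x a) = c \<odot>\<^bsub>E\<^esub> (a \<odot>\<^bsub>E\<^esub> e) \<oplus>\<^bsub>E\<^esub> \<ominus>\<^bsub>E\<^esub> (c \<odot>\<^bsub>E\<^esub> x a)"
        using c ac ec xc[OF a] by (simp add: E.smult_r_distr E.smult_r_minus)
      then show "c \<odot>\<^bsub>E\<^esub> (a \<odot>\<^bsub>E\<^esub> e \<oplus>\<^bsub>E\<^esub> \<ominus>\<^bsub>E\<^esub> x a) = \<zero>\<^bsub>E\<^esub>"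
        using eq c ac ec xc[OF a] by (simp add: E.r_neg)
    qed
  qed
qed



lemma (in abelian_subgroup) coset_eq_iff:
  assumes "u \<in> carrier G" "v \<in> carrier G"
  shows "H +> u = H +> v \<longleftrightarrow> u \<oplus> \<ominus> v \<in> H"
proof
  assume "H +> u = H +> v"
  then have "u \<in> H +> v" using a_rcos_self[OF assms(1)] by simp
  then show "u \<oplus> \<ominus> v \<in> H" using a_rcos_module_imp assms by blast
next
  assume "u \<oplus> \<ominus> v \<in> H"
  then have "u \<in> H +> v" using a_rcos_module_rev assms by blast
  then show "H +> u = H +> v" using a_repr_independence' assms by blast
qed

lemma (in abelian_subgroup) rcosets_repr:
  "X \<in> a_rcosets H \<Longrightarrow> \<exists>x\<in>carrier G. X = H +> x"
  by (auto simp: A_RCOSETS_def')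

lemma (in module) smult_comm:
  assumes "p \<in> carrier R" "q \<in> carrier R" "v \<in> carrier M"
  shows "p \<odot>\<^bsub>M\<^esub> (q \<odot>\<^bsub>M\<^esub> v) = q \<odot>\<^bsub>M\<^esub> (p \<odot>\<^bsub>M\<^esub> v)"
  using assms by (metis smult_assoc1 m_comm)

lemma quot_smult_rep:
  fixes R (structure)
  assumes "cring R" "module R E" "r \<in> carrier R" "a \<in> carrier R" "x \<in> carrier E"
  shows "quot_smult E (smult_sub E r) (PIdl r +> a) (smult_sub E r +>\<^bsub>E\<^esub> x)
       = smult_sub E r +>\<^bsub>E\<^esub> (a \<odot>\<^bsub>E\<^esub> x)"
proof -
  interpret cring R by fact
  interpret E: module R E by fact
  define N where "N = smult_sub E r"
  define I where "I = PIdl r"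
  interpret N: abelian_subgroup N E unfolding N_def using smult_sub_subgroup[OF assms(2,3)] .
  interpret I: ideal I R unfolding I_def using cgenideal_ideal[OF assms(3)] .
  have ax: "a \<odot>\<^bsub>E\<^esub> x \<in> carrier E" using assms by simp
  define S where "S = (\<Union>b\<in>I +> a. \<Union>y\<in>N +>\<^bsub>E\<^esub> x. {b \<odot>\<^bsub>E\<^esub> y})"
  have S1: "S \<subseteq> N +>\<^bsub>E\<^esub> (a \<odot>\<^bsub>E\<^esub> x)"
  proof
    fix s assume "s \<in> S"
    then obtain b y where b: "b \<in> I +> a" and y: "y \<in> N +>\<^bsub>E\<^esub> x" and s: "s = b \<odot>\<^bsub>E\<^esub> y"
      unfolding S_def by blast
    obtain i where i: "i \<in> I" "b = i \<oplus> a" using b unfolding a_r_coset_def' by blast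
    obtain t where t: "t \<in> carrier R" "i = t \<otimes> r" using i(1) unfolding I_def cgenideal_def by blast
    obtain n where n: "n \<in> N" "y = n \<oplus>\<^bsub>E\<^esub> x" using y unfolding a_r_coset_def' by blast
    obtain z where z: "z \<in> carrier E" "n = r \<odot>\<^bsub>E\<^esub> z" using n(1) unfolding N_def smult_sub_def by blast
    note c = assms(3,4,5) t(1) z(1)
    define w where "w = t \<odot>\<^bsub>E\<^esub> (r \<odot>\<^bsub>E\<^esub> z) \<oplus>\<^bsub>E\<^esub> t \<odot>\<^bsub>E\<^esub> x \<oplus>\<^bsub>E\<^esub> a \<odot>\<^bsub>E\<^esub> z"
    have wc: "w \<in> carrier E" using c by (simp add: w_def)
    have "s = (t \<otimes> r \<oplus> a) \<odot>\<^bsub>E\<^esub> (r \<odot>\<^bsub>E\<^esub> z \<oplus>\<^bsub>E\<^esub> x)" using s i t n z by simp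
    also have "\<dots> = ((t \<otimes> r) \<odot>\<^bsub>E\<^esub> (r \<odot>\<^bsub>E\<^esub> z) \<oplus>\<^bsub>E\<^esub> (t \<otimes> r) \<odot>\<^bsub>E\<^esub> x)
        \<oplus>\<^bsub>E\<^esub> (a \<odot>\<^bsub>E\<^esub> (r \<odot>\<^bsub>E\<^esub> z) \<oplus>\<^bsub>E\<^esub> a \<odot>\<^bsub>E\<^esub> x)"
      using c by (simp add: E.smult_l_distr E.smult_r_distr E.a_ac)
    also have "\<dots> = (r \<odot>\<^bsub>E\<^esub> (t \<odot>\<^bsub>E\<^esub> (r \<odot>\<^bsub>E\<^esub> z)) \<oplus>\<^bsub>E\<^esub> r \<odot>\<^bsub>E\<^esub> (t \<odot>\<^bsub>E\<^esub> x))
        \<oplus>\<^bsub>E\<^esub> (r \<odot>\<^bsub>E\<^esub> (a \<odot>\<^bsub>E\<^esub> z) \<oplus>\<^bsub>E\<^esub> a \<odot>\<^bsub>E\<^esub> x)"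
      using c by (simp add: E.smult_assoc1 E.smult_comm[of a r z] E.smult_comm[of t r])
    also have "\<dots> = r \<odot>\<^bsub>E\<^esub> w \<oplus>\<^bsub>E\<^esub> a \<odot>\<^bsub>E\<^esub> x"
      using c by (simp add: w_def E.smult_r_distr E.a_ac)
    finally have "s = r \<odot>\<^bsub>E\<^esub> w \<oplus>\<^bsub>E\<^esub> a \<odot>\<^bsub>E\<^esub> x" .
    moreover have "r \<odot>\<^bsub>E\<^esub> w \<in> N" using wc unfolding N_def smult_sub_def by blast
    ultimately show "s \<in> N +>\<^bsub>E\<^esub> (a \<odot>\<^bsub>E\<^esub> x)" unfolding a_r_coset_def' by blast
  qed
  have S2: "a \<odot>\<^bsub>E\<^esub> x \<in> S"
  proof -
    have "a \<in> I +> a" using I.a_rcos_self assms(4) by blast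
    moreover have "x \<in> N +>\<^bsub>E\<^esub> x" using N.a_rcos_self assms(5) by blast
    ultimately show ?thesis unfolding S_def by blast
  qed
  have "S <+>\<^bsub>E\<^esub> N = N +>\<^bsub>E\<^esub> (a \<odot>\<^bsub>E\<^esub> x)"
  proof
    show "S <+>\<^bsub>E\<^esub> N \<subseteq> N +>\<^bsub>E\<^esub> (a \<odot>\<^bsub>E\<^esub> x)"
    proof
      fix z assume "z \<in> S <+>\<^bsub>E\<^esub> N"
      then obtain s n where s: "s \<in> S" and n: "n \<in> N" and z: "z = s \<oplus>\<^bsub>E\<^esub> n"
        unfolding set_add_def' by blast
      obtain h where h: "h \<in> N" "s = h \<oplus>\<^bsub>E\<^esub> a \<odot>\<^bsub>E\<^esub> x" using S1 s unfolding a_r_coset_def' by blast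
      have "z = (h \<oplus>\<^bsub>E\<^esub> n) \<oplus>\<^bsub>E\<^esub> a \<odot>\<^bsub>E\<^esub> x" using z h n ax by (simp add: E.a_ac)
      moreover have "h \<oplus>\<^bsub>E\<^esub> n \<in> N" using h n by simp
      ultimately show "z \<in> N +>\<^bsub>E\<^esub> (a \<odot>\<^bsub>E\<^esub> x)" unfolding a_r_coset_def' by blast
    qed
  next
    show "N +>\<^bsub>E\<^esub> (a \<odot>\<^bsub>E\<^esub> x) \<subseteq> S <+>\<^bsub>E\<^esub> N"
    proof
      fix z assume "z \<in> N +>\<^bsub>E\<^esub> (a \<odot>\<^bsub>E\<^esub> x)"
      then obtain h where h: "h \<in> N" "z = h \<oplus>\<^bsub>E\<^esub> a \<odot>\<^bsub>E\<^esub> x" unfolding a_r_coset_def' by blast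
      then have "z = a \<odot>\<^bsub>E\<^esub> x \<oplus>\<^bsub>E\<^esub> h" using ax by (simp add: E.a_comm)
      then show "z \<in> S <+>\<^bsub>E\<^esub> N" using S2 h(1) unfolding set_add_def' by blast
    qed
  qed
  then show ?thesis unfolding quot_smult_def S_def N_def I_def by simp
qed


lemma quot_module_is_module:
  fixes R (structure)
  assumes cr: "cring R" and modE: "module R E" and r: "r \<in> carrier R"
  shows "module (R Quot PIdl r) (quot_module R E (smult_sub E r))"
proof -
  interpret cring R by fact
  interpret E: module R E by fact
  define N where "N = smult_sub E r"
  define I where "I = PIdl r"
  interpret N: abelian_subgroup N E unfolding N_def using smult_sub_subgroup[OF modE r] .
  interpret I: ideal I R unfolding I_def using cgenideal_ideal[OF r] .
  define R' where "R' = R Quot I"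
  define E' where "E' = quot_module R E N"
  have cR: "carrier R' = a_rcosets I" and aR: "\<And>A B. A \<oplus>\<^bsub>R'\<^esub> B = A <+> B"
    and mR: "\<And>A B. A \<otimes>\<^bsub>R'\<^esub> B = rcoset_mult R I A B" and oR: "\<one>\<^bsub>R'\<^esub> = I +> \<one>"
    by (simp_all add: R'_def FactRing_def)
  have cE: "carrier E' = a_rcosets\<^bsub>E\<^esub> N" and aE: "\<And>X Y. X \<oplus>\<^bsub>E'\<^esub> Y = X <+>\<^bsub>E\<^esub> Y"
    and zE: "\<zero>\<^bsub>E'\<^esub> = N" and sE: "\<And>A X. A \<odot>\<^bsub>E'\<^esub> X = quot_smult E N A X"
    by (simp_all add: E'_def quot_module_def)
  have repR: "\<And>A. A \<in> a_rcosets I \<Longrightarrow> \<exists>a\<in>carrier R. A = I +> a" by (auto simp: A_RCOSETS_def')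
  have repE: "\<And>X. X \<in> a_rcosets\<^bsub>E\<^esub> N \<Longrightarrow> \<exists>x\<in>carrier E. X = N +>\<^bsub>E\<^esub> x" by (rule N.rcosets_repr)
  have inE: "\<And>x. x \<in> carrier E \<Longrightarrow> N +>\<^bsub>E\<^esub> x \<in> a_rcosets\<^bsub>E\<^esub> N"
    using E.a_rcosetsI N.a_subset by blast
  have inR: "\<And>a. a \<in> carrier R \<Longrightarrow> I +> a \<in> a_rcosets I"
    using a_rcosetsI I.a_subset by blast
  have qs: "\<And>a x. a \<in> carrier R \<Longrightarrow> x \<in> carrier E \<Longrightarrow> quot_smult E N (I +> a) (N +>\<^bsub>E\<^esub> x) = N +>\<^bsub>E\<^esub> (a \<odot>\<^bsub>E\<^esub> x)"
    unfolding N_def I_def using quot_smult_rep[OF cr modE r] by blast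
  have ag: "abelian_group E'"
  proof (rule abelian_groupI)
    fix X Y assume "X \<in> carrier E'" "Y \<in> carrier E'"
    then have "X \<in> a_rcosets\<^bsub>E\<^esub> N" "Y \<in> a_rcosets\<^bsub>E\<^esub> N" by (simp_all only: cE)
    then show "X \<oplus>\<^bsub>E'\<^esub> Y \<in> carrier E'" unfolding aE cE by (rule N.a_setmult_closed)
  next
    show "\<zero>\<^bsub>E'\<^esub> \<in> carrier E'" using cE zE N.a_subgroup_in_rcosets by simp
  next
    fix X Y Z assume "X \<in> carrier E'" "Y \<in> carrier E'" "Z \<in> carrier E'"
    then obtain x y z where h: "x \<in> carrier E" "y \<in> carrier E" "z \<in> carrier E" "X = N +>\<^bsub>E\<^esub> x"
      "Y = N +>\<^bsub>E\<^esub> y" "Z = N +>\<^bsub>E\<^esub> z"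
      using repE unfolding cE by metis
    have "X \<oplus>\<^bsub>E'\<^esub> Y \<oplus>\<^bsub>E'\<^esub> Z = N +>\<^bsub>E\<^esub> (x \<oplus>\<^bsub>E\<^esub> y \<oplus>\<^bsub>E\<^esub> z)"
      unfolding aE h(4-6) using h(1-3) by (simp add: N.a_rcos_sum)
    moreover have "X \<oplus>\<^bsub>E'\<^esub> (Y \<oplus>\<^bsub>E'\<^esub> Z) = N +>\<^bsub>E\<^esub> (x \<oplus>\<^bsub>E\<^esub> (y \<oplus>\<^bsub>E\<^esub> z))"
      unfolding aE h(4-6) using h(1-3) by (simp add: N.a_rcos_sum)
    moreover have "x \<oplus>\<^bsub>E\<^esub> y \<oplus>\<^bsub>E\<^esub> z = x \<oplus>\<^bsub>E\<^esub> (y \<oplus>\<^bsub>E\<^esub> z)" using h(1-3) by (rule E.a_assoc)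
    ultimately show "X \<oplus>\<^bsub>E'\<^esub> Y \<oplus>\<^bsub>E'\<^esub> Z = X \<oplus>\<^bsub>E'\<^esub> (Y \<oplus>\<^bsub>E'\<^esub> Z)"
      by (simp only:)
  next
    fix X Y assume "X \<in> carrier E'" "Y \<in> carrier E'"
    then obtain x y where "x \<in> carrier E" "y \<in> carrier E" "X = N +>\<^bsub>E\<^esub> x" "Y = N +>\<^bsub>E\<^esub> y"
      using repE unfolding cE by metis
    then show "X \<oplus>\<^bsub>E'\<^esub> Y = Y \<oplus>\<^bsub>E'\<^esub> X" using aE N.a_rcos_sum E.a_comm by simp
  next
    fix X assume "X \<in> carrier E'"
    then have "X \<in> a_rcosets\<^bsub>E\<^esub> N" by (simp only: cE)
    then show "\<zero>\<^bsub>E'\<^esub> \<oplus>\<^bsub>E'\<^esub> X = X" unfolding aE zE by (rule N.rcosets_add_eq)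
  next
    fix X assume "X \<in> carrier E'"
    then obtain x where x: "x \<in> carrier E" "X = N +>\<^bsub>E\<^esub> x" using repE unfolding cE by metis
    have "(N +>\<^bsub>E\<^esub> \<ominus>\<^bsub>E\<^esub> x) <+>\<^bsub>E\<^esub> X = N +>\<^bsub>E\<^esub> \<zero>\<^bsub>E\<^esub>"
      using x N.a_rcos_sum by (simp add: E.l_neg)
    also have "\<dots> = N" using N.a_rcos_const N.zero_closed by blast
    finally show "\<exists>Y\<in>carrier E'. Y \<oplus>\<^bsub>E'\<^esub> X = \<zero>\<^bsub>E'\<^esub>"
      using x inE[of "\<ominus>\<^bsub>E\<^esub> x"] cE aE zE by force
  qed
  have "module R' E'"
  proof (rule moduleI[OF _ ag])
    show "cring R'" unfolding R'_def using I.quotient_is_cring[OF cr] .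
  next
    fix A X assume "A \<in> carrier R'" "X \<in> carrier E'"
    then obtain a x where "a \<in> carrier R" "x \<in> carrier E" "A = I +> a" "X = N +>\<^bsub>E\<^esub> x"
      using repR repE unfolding cR cE by metis
    then show "A \<odot>\<^bsub>E'\<^esub> X \<in> carrier E'" using sE qs cE inE by simp
  next
    fix A B X assume "A \<in> carrier R'" "B \<in> carrier R'" "X \<in> carrier E'"
    then obtain a b x where h: "a \<in> carrier R" "b \<in> carrier R" "x \<in> carrier E" "A = I +> a" "B = I +> b"
      "X = N +>\<^bsub>E\<^esub> x"
      using repR repE unfolding cR cE by metis
    have "A \<oplus>\<^bsub>R'\<^esub> B = I +> (a \<oplus> b)" using h aR I.a_rcos_sum by simp
    then show "(A \<oplus>\<^bsub>R'\<^esub> B) \<odot>\<^bsub>E'\<^esub> X = A \<odot>\<^bsub>E'\<^esub> X \<oplus>\<^bsub>E'\<^esub> B \<odot>\<^bsub>E'\<^esub> X"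
      using h sE aE qs N.a_rcos_sum by (simp add: E.smult_l_distr)
  next
    fix A X Y assume "A \<in> carrier R'" "X \<in> carrier E'" "Y \<in> carrier E'"
    then obtain a x y where h: "a \<in> carrier R" "x \<in> carrier E" "y \<in> carrier E" "A = I +> a"
      "X = N +>\<^bsub>E\<^esub> x" "Y = N +>\<^bsub>E\<^esub> y"
      using repR repE unfolding cR cE by metis
    then show "A \<odot>\<^bsub>E'\<^esub> (X \<oplus>\<^bsub>E'\<^esub> Y) = A \<odot>\<^bsub>E'\<^esub> X \<oplus>\<^bsub>E'\<^esub> A \<odot>\<^bsub>E'\<^esub> Y"
      using sE aE qs N.a_rcos_sum by (simp add: E.smult_r_distr)
  next
    fix A B X assume "A \<in> carrier R'" "B \<in> carrier R'" "X \<in> carrier E'"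
    then obtain a b x where h: "a \<in> carrier R" "b \<in> carrier R" "x \<in> carrier E" "A = I +> a" "B = I +> b"
      "X = N +>\<^bsub>E\<^esub> x"
      using repR repE unfolding cR cE by metis
    have "A \<otimes>\<^bsub>R'\<^esub> B = I +> (a \<otimes> b)" using h mR I.rcoset_mult_add by simp
    then show "(A \<otimes>\<^bsub>R'\<^esub> B) \<odot>\<^bsub>E'\<^esub> X = A \<odot>\<^bsub>E'\<^esub> (B \<odot>\<^bsub>E'\<^esub> X)"
      using h sE qs by (simp add: E.smult_assoc1)
  next
    fix X assume "X \<in> carrier E'"
    then obtain x where "x \<in> carrier E" "X = N +>\<^bsub>E\<^esub> x" using repE unfolding cE by metis
    then show "\<one>\<^bsub>R'\<^esub> \<odot>\<^bsub>E'\<^esub> X = X" using oR sE qs by simp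
  qed
  then show ?thesis unfolding R'_def E'_def N_def I_def .
qed


lemma quot_baer:
  fixes R (structure)
  assumes val: "valuation_ring R" and modE: "module R E" and bE: "baer R E" and r: "r \<in> carrier R"
  shows "baer (R Quot PIdl r) (quot_module R E (smult_sub E r))"
proof -
  have cr: "cring R" using val by (simp add: valuation_ring_def)
  interpret cring R by fact
  interpret E: module R E by fact
  define N where "N = smult_sub E r"
  define I where "I = PIdl r"
  interpret N: abelian_subgroup N E unfolding N_def using smult_sub_subgroup[OF modE r] .
  interpret I: ideal I R unfolding I_def using cgenideal_ideal[OF r] .
  define R' where "R' = R Quot I"
  define E' where "E' = quot_module R E N"
  have modQ: "module R' E'" unfolding R'_def E'_def I_def N_def by (rule quot_module_is_module[OF cr modE r])
  interpret Q: module R' E' by fact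
  have cR: "carrier R' = a_rcosets I" and aR: "\<And>A B. A \<oplus>\<^bsub>R'\<^esub> B = A <+> B"
    and mR: "\<And>A B. A \<otimes>\<^bsub>R'\<^esub> B = rcoset_mult R I A B" and zR: "\<zero>\<^bsub>R'\<^esub> = I"
    by (simp_all add: R'_def FactRing_def)
  have cE: "carrier E' = a_rcosets\<^bsub>E\<^esub> N" and zE: "\<zero>\<^bsub>E'\<^esub> = N" and sE: "\<And>A X. A \<odot>\<^bsub>E'\<^esub> X = quot_smult E N A X"
    by (simp_all add: E'_def quot_module_def)
  have repR: "\<And>A. A \<in> a_rcosets I \<Longrightarrow> \<exists>a\<in>carrier R. A = I +> a" by (auto simp: A_RCOSETS_def')
  have repE: "\<And>X. X \<in> a_rcosets\<^bsub>E\<^esub> N \<Longrightarrow> \<exists>x\<in>carrier E. X = N +>\<^bsub>E\<^esub> x" by (rule N.rcosets_repr)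
  have inE: "\<And>x. x \<in> carrier E \<Longrightarrow> N +>\<^bsub>E\<^esub> x \<in> a_rcosets\<^bsub>E\<^esub> N"
    using E.a_rcosetsI N.a_subset by blast
  have inR: "\<And>a. a \<in> carrier R \<Longrightarrow> I +> a \<in> a_rcosets I"
    using a_rcosetsI I.a_subset by blast
  have qs: "\<And>a x. a \<in> carrier R \<Longrightarrow> x \<in> carrier E \<Longrightarrow> quot_smult E N (I +> a) (N +>\<^bsub>E\<^esub> x) = N +>\<^bsub>E\<^esub> (a \<odot>\<^bsub>E\<^esub> x)"
    unfolding N_def I_def using quot_smult_rep[OF cr modE r] by blast
  have "baer R' E'"
    unfolding baer_def
  proof (intro allI impI, elim conjE)
    fix J' f assume J'i: "ideal J' R'" and fc: "\<forall>k\<in>J'. f k \<in> carrier E'"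
      and fadd: "\<forall>k\<in>J'. \<forall>k'\<in>J'. f (k \<oplus>\<^bsub>R'\<^esub> k') = f k \<oplus>\<^bsub>E'\<^esub> f k'"
      and fsm: "\<forall>t\<in>carrier R'. \<forall>k\<in>J'. f (t \<otimes>\<^bsub>R'\<^esub> k) = t \<odot>\<^bsub>E'\<^esub> f k"
    interpret J': ideal J' R' by fact
    have J'c: "J' \<subseteq> a_rcosets I" using J'.a_subset cR by simp
    have IJ': "I \<in> J'" using J'.zero_closed zR by simp
    have f0: "f I = N"
    proof -
      have "f (\<zero>\<^bsub>R'\<^esub> \<otimes>\<^bsub>R'\<^esub> \<zero>\<^bsub>R'\<^esub>) = \<zero>\<^bsub>R'\<^esub> \<odot>\<^bsub>E'\<^esub> f \<zero>\<^bsub>R'\<^esub>"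
        using fsm J'.zero_closed by blast
      moreover have "\<zero>\<^bsub>R'\<^esub> \<otimes>\<^bsub>R'\<^esub> \<zero>\<^bsub>R'\<^esub> = \<zero>\<^bsub>R'\<^esub>" by simp
      moreover have "f \<zero>\<^bsub>R'\<^esub> \<in> carrier E'" using fc J'.zero_closed by blast
      ultimately have "f \<zero>\<^bsub>R'\<^esub> = \<zero>\<^bsub>E'\<^esub>" by simp
      then show ?thesis using zR zE by simp
    qed
    define J where "J = {a \<in> carrier R. I +> a \<in> J'}"
    define x where "x a = (SOME y. y \<in> carrier E \<and> f (I +> a) = N +>\<^bsub>E\<^esub> y)" for a
    have xp: "x a \<in> carrier E \<and> f (I +> a) = N +>\<^bsub>E\<^esub> x a" if a: "a \<in> J" for a
    proof -
      have "f (I +> a) \<in> a_rcosets\<^bsub>E\<^esub> N" using fc a cE unfolding J_def by blast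
      then have "\<exists>y. y \<in> carrier E \<and> f (I +> a) = N +>\<^bsub>E\<^esub> y" using repE by blast
      then show ?thesis unfolding x_def by (rule someI_ex)
    qed
    have rs_add: "\<And>a b. a \<in> carrier R \<Longrightarrow> b \<in> carrier R \<Longrightarrow> I +> (a \<oplus> b) = (I +> a) \<oplus>\<^bsub>R'\<^esub> (I +> b)"
      using aR I.a_rcos_sum by simp
    have rs_mult: "\<And>a b. a \<in> carrier R \<Longrightarrow> b \<in> carrier R \<Longrightarrow> I +> (a \<otimes> b) = (I +> a) \<otimes>\<^bsub>R'\<^esub> (I +> b)"
      using mR I.rcoset_mult_add by simp
    have Jid: "ideal J R"
    proof (rule ideal_byprops)
      show "J \<subseteq> carrier R" unfolding J_def by blast
      have "I +> \<zero> = I" using I.a_rcos_const[OF I.zero_closed] .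
      then show "\<zero> \<in> J" unfolding J_def using IJ' by simp
    next
      fix a b assume a: "a \<in> J" and b: "b \<in> J"
      then have ac: "a \<in> carrier R" "I +> a \<in> J'" and bc: "b \<in> carrier R" "I +> b \<in> J'" unfolding J_def by blast+
      have "(I +> a) \<oplus>\<^bsub>R'\<^esub> (I +> b) \<in> J'" using ac bc J'.a_closed by blast
      then show "a \<oplus> b \<in> J" unfolding J_def using rs_add[OF ac(1) bc(1)] ac bc by simp
    next
      fix a t assume a: "a \<in> J" and t: "t \<in> carrier R"
      then have ac: "a \<in> carrier R" "I +> a \<in> J'" unfolding J_def by blast+
      have "I +> t \<in> carrier R'" using inR[OF t] cR by simp
      then have "(I +> t) \<otimes>\<^bsub>R'\<^esub> (I +> a) \<in> J'" using ac J'.I_l_closed by blast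
      then show "t \<otimes> a \<in> J" unfolding J_def using rs_mult[OF t ac(1)] ac t by simp
    qed
    have IJ: "PIdl r \<subseteq> J"
    proof
      fix a assume "a \<in> PIdl r"
      then have a: "a \<in> I" unfolding I_def .
      then have "I +> a = I" by (rule I.a_rcos_const)
      then show "a \<in> J" unfolding J_def using a IJ' by simp
    qed
    have fmul: "N +>\<^bsub>E\<^esub> x (b \<otimes> a) = N +>\<^bsub>E\<^esub> (b \<odot>\<^bsub>E\<^esub> x a)" if a: "a \<in> J" and b: "b \<in> carrier R" for a b
    proof -
      have ac: "a \<in> carrier R" "I +> a \<in> J'" using a unfolding J_def by blast+
      have ba: "b \<otimes> a \<in> J" using Jid a b by (simp add: ideal.I_l_closed)
      have tb: "I +> b \<in> carrier R'" using inR[OF b] cR by simp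
      have "N +>\<^bsub>E\<^esub> x (b \<otimes> a) = f (I +> (b \<otimes> a))" using xp[OF ba] by simp
      also have "\<dots> = (I +> b) \<odot>\<^bsub>E'\<^esub> f (I +> a)" using rs_mult[OF b ac(1)] fsm tb ac(2) by simp
      also have "\<dots> = N +>\<^bsub>E\<^esub> (b \<odot>\<^bsub>E\<^esub> x a)" using xp[OF a] sE qs b by simp
      finally show ?thesis .
    qed
    have "\<exists>e\<in>carrier E. \<forall>a\<in>J. a \<odot>\<^bsub>E\<^esub> e \<oplus>\<^bsub>E\<^esub> \<ominus>\<^bsub>E\<^esub> x a \<in> smult_sub E r"
    proof (rule core_lemma[OF val modE bE r Jid IJ])
      fix a assume "a \<in> J" then show "x a \<in> carrier E" using xp by blast
    next
      fix a b assume a: "a \<in> J" and b: "b \<in> carrier R"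
      have ba: "b \<otimes> a \<in> J" using Jid a b by (simp add: ideal.I_l_closed)
      have "N +>\<^bsub>E\<^esub> (b \<odot>\<^bsub>E\<^esub> x a) = N +>\<^bsub>E\<^esub> x (b \<otimes> a)" using fmul[OF a b] by simp
      then show "b \<odot>\<^bsub>E\<^esub> x a \<oplus>\<^bsub>E\<^esub> \<ominus>\<^bsub>E\<^esub> x (b \<otimes> a) \<in> smult_sub E r"
        using N.coset_eq_iff xp[OF a] xp[OF ba] b unfolding N_def by simp
    next
      fix a assume a: "a \<in> PIdl r"
      then have aJ: "a \<in> J" using IJ by blast
      have "I +> a = I" using a unfolding I_def[symmetric] by (rule I.a_rcos_const)
      then have "N +>\<^bsub>E\<^esub> x a = N" using xp[OF aJ] f0 by simp
      then show "x a \<in> smult_sub E r" using N.a_rcos_self xp[OF aJ] unfolding N_def by metis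
    qed
    then obtain e where ec: "e \<in> carrier E" and he: "\<And>a. a \<in> J \<Longrightarrow> a \<odot>\<^bsub>E\<^esub> e \<oplus>\<^bsub>E\<^esub> \<ominus>\<^bsub>E\<^esub> x a \<in> N"
      unfolding N_def by blast
    show "\<exists>e'\<in>carrier E'. \<forall>k\<in>J'. f k = k \<odot>\<^bsub>E'\<^esub> e'"
    proof (intro bexI ballI)
      show "N +>\<^bsub>E\<^esub> e \<in> carrier E'" using inE[OF ec] cE by simp
      fix k assume k: "k \<in> J'"
      then obtain a where a: "a \<in> carrier R" "k = I +> a" using J'c repR by blast
      then have aJ: "a \<in> J" unfolding J_def using k by blast
      have "k \<odot>\<^bsub>E'\<^esub> (N +>\<^bsub>E\<^esub> e) = N +>\<^bsub>E\<^esub> (a \<odot>\<^bsub>E\<^esub> e)" using a sE qs ec by simp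
      also have "\<dots> = N +>\<^bsub>E\<^esub> x a" using N.coset_eq_iff he[OF aJ] xp[OF aJ] a ec by simp
      also have "\<dots> = f k" using xp[OF aJ] a by simp
      finally show "f k = k \<odot>\<^bsub>E'\<^esub> (N +>\<^bsub>E\<^esub> e)" by simp
    qed
  qed
  then show ?thesis unfolding R'_def E'_def I_def N_def .
qed

theorem mainTheorem3:
  fixes R :: "('a, 'm) ring_scheme"
    and E :: "('a, 'b, 'n) module_scheme"
    and P :: "'a set"
    and r :: 'a
  assumes "valuation_ring R"
    and "maximalideal P R"
    and "injective_module R E TYPE('a)"
    and "r \<in> P"
  shows "injective_module (R Quot (PIdl\<^bsub>R\<^esub> r)) (quot_module R E (smult_sub E r)) TYPE('c)"
proof -
  have cr: "cring R" using assms(1) by (simp add: valuation_ring_def)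
  interpret P: maximalideal P R by fact
  have r: "r \<in> carrier R" using assms(4) P.a_subset by blast
  have modE: "module R E" using assms(3) by (simp add: injective_module_def)
  have bE: "baer R E" by (rule baer_from_inj[OF cr assms(3)])
  have modQ: "module (R Quot (PIdl\<^bsub>R\<^esub> r)) (quot_module R E (smult_sub E r))"
    by (rule quot_module_is_module[OF cr modE r])
  have bQ: "baer (R Quot (PIdl\<^bsub>R\<^esub> r)) (quot_module R E (smult_sub E r))"
    by (rule quot_baer[OF assms(1) modE bE r])
  show ?thesis unfolding injective_module_def
    using modQ baer_criterion[OF modQ bQ] by blast
qed


end
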